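(* Let $\Omega\subseteq\mathbb{R}^N$ be a bounded domain with $C^2$-boundary, $\alpha>0$, $\beta>0$, $1<p<q<\infty$, and $\lambda>\beta\hat{\lambda}_1(q)$. Then every minimizing sequence for $m_\lambda=\inf\{\varphi_\lambda(u):u\in N_\lambda\}$, i.e. every sequence $(u_n)\subseteq N_\lambda$ with $\varphi_\lambda(u_n)\to m_\lambda$, is bounded in $W^{1,q}_0(\Omega)$.
   Context: $\hat{\lambda}_1(q)=\inf\{\|Du\|_q^q/\|u\|_q^q: u\in W^{1,q}_0(\Omega),\ u\neq 0\}>0$. The energy functional is $\varphi_\lambda(u)=\frac{\alpha}{p}\|Du\|_p^p+\frac{\beta}{q}\|Du\|_q^q-\frac{\lambda}{q}\|u\|_q^q$ for $u\in W^{1,q}_0(\Omega)$, and the Nehari manifold is $N_\lambda=\{u\in W^{1,q}_0(\Omega)\setminus\{0\}: \alpha\|Du\|_p^p+\beta\|Du\|_q^q=\lambda\|u\|_q^q\}$ (equivalently $\langle\varphi_\lambda'(u),u\rangle=0$, $u\ne0$). *)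

theory Defs
  imports "HOL-Analysis.Analysis"
begin

text \<open>Ambient space R^N is an arbitrary euclidean_space 'a (N = DIM('a)).\<close>

fun Ck :: "nat \<Rightarrow> ('a::euclidean_space \<Rightarrow> real) \<Rightarrow> bool" where
  "Ck 0 f = continuous_on UNIV f"
| "Ck (Suc k) f = ((\<forall>x. f differentiable (at x)) \<and>
      (\<forall>i\<in>Basis. Ck k (\<lambda>x. frechet_derivative f (at x) i)))"

definition smooth_fun :: "('a::euclidean_space \<Rightarrow> real) \<Rightarrow> bool" where
  "smooth_fun f = (\<forall>k. Ck k f)"

definition cgrad :: "('a::euclidean_space \<Rightarrow> real) \<Rightarrow> 'a \<Rightarrow> 'a" where
  "cgrad f x = (\<Sum>i\<in>Basis. frechet_derivative f (at x) i *\<^sub>R i)"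

definition test_fun :: "'a::euclidean_space set \<Rightarrow> ('a \<Rightarrow> real) \<Rightarrow> bool" where
  "test_fun \<Omega> \<phi> = (smooth_fun \<phi> \<and> compact (closure {x. \<phi> x \<noteq> 0})
       \<and> closure {x. \<phi> x \<noteq> 0} \<subseteq> \<Omega>)"

text \<open>Bounded domain with C^2 boundary: open, connected, bounded, and near every
  boundary point, after choosing a unit normal direction e, Omega is the
  supergraph of a C^2 function of the component orthogonal to e.\<close>
definition C2_boundary :: "'a::euclidean_space set \<Rightarrow> bool" where
  "C2_boundary \<Omega> = (\<forall>x0\<in>frontier \<Omega>. \<exists>r>0. \<exists>e \<gamma>. norm e = 1 \<and> Ck 2 \<gamma> \<and>
      \<Omega> \<inter> ball x0 r = {x\<in>ball x0 r. x \<bullet> e > \<gamma> (x - (x \<bullet> e) *\<^sub>R e)})"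

definition bounded_C2_domain :: "'a::euclidean_space set \<Rightarrow> bool" where
  "bounded_C2_domain \<Omega> = (open \<Omega> \<and> connected \<Omega> \<and> \<Omega> \<noteq> {} \<and> bounded \<Omega> \<and> C2_boundary \<Omega>)"

definition Lq_int :: "real \<Rightarrow> 'a::euclidean_space set \<Rightarrow> ('a \<Rightarrow> real) \<Rightarrow> real" where
  "Lq_int q \<Omega> f = enn2real (\<integral>\<^sup>+ x\<in>\<Omega>. ennreal (\<bar>f x\<bar> powr q) \<partial>lborel)"

definition Lq_int_vec :: "real \<Rightarrow> 'a::euclidean_space set \<Rightarrow> ('a \<Rightarrow> 'a) \<Rightarrow> real" where
  "Lq_int_vec q \<Omega> g = enn2real (\<integral>\<^sup>+ x\<in>\<Omega>. ennreal (norm (g x) powr q) \<partial>lborel)"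

text \<open>u in W^{1,q}_0(Omega) with weak gradient g: limit in W^{1,q} of test functions.\<close>
definition sobolev0 :: "real \<Rightarrow> 'a::euclidean_space set \<Rightarrow> ('a \<Rightarrow> real) \<Rightarrow> ('a \<Rightarrow> 'a) \<Rightarrow> bool" where
  "sobolev0 q \<Omega> u g = (u \<in> borel_measurable lborel \<and> g \<in> borel_measurable lborel \<and>
     (\<exists>\<phi>. (\<forall>k. test_fun \<Omega> (\<phi> k)) \<and>
        ((\<lambda>k. \<integral>\<^sup>+ x\<in>\<Omega>. ennreal (\<bar>\<phi> k x - u x\<bar> powr q) \<partial>lborel) \<longlonglongrightarrow> 0) \<and>
        ((\<lambda>k. \<integral>\<^sup>+ x\<in>\<Omega>. ennreal (norm (cgrad (\<phi> k) x - g x) powr q) \<partial>lborel) \<longlonglongrightarrow> 0)))"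

definition W0 :: "real \<Rightarrow> 'a::euclidean_space set \<Rightarrow> ('a \<Rightarrow> real) set" where
  "W0 q \<Omega> = {u. \<exists>g. sobolev0 q \<Omega> u g}"

text \<open>Weak gradient Du (unique up to null sets, so all integrals below are well defined).\<close>
definition D :: "real \<Rightarrow> 'a::euclidean_space set \<Rightarrow> ('a \<Rightarrow> real) \<Rightarrow> 'a \<Rightarrow> 'a" where
  "D q \<Omega> u = (SOME g. sobolev0 q \<Omega> u g)"

definition W_norm :: "real \<Rightarrow> 'a::euclidean_space set \<Rightarrow> ('a \<Rightarrow> real) \<Rightarrow> real" where
  "W_norm q \<Omega> u = Lq_int q \<Omega> u powr (1/q) + Lq_int_vec q \<Omega> (D q \<Omega> u) powr (1/q)"

text \<open>hat lambda_1(q); u \<noteq> 0 in W^{1,q}_0 means ||u||_q \<noteq> 0.\<close>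
definition lambda1_hat :: "real \<Rightarrow> 'a::euclidean_space set \<Rightarrow> real" where
  "lambda1_hat q \<Omega> = Inf {Lq_int_vec q \<Omega> (D q \<Omega> u) / Lq_int q \<Omega> u | u. u \<in> W0 q \<Omega> \<and> Lq_int q \<Omega> u \<noteq> 0}"

definition energy :: "real \<Rightarrow> real \<Rightarrow> real \<Rightarrow> real \<Rightarrow> real \<Rightarrow> 'a::euclidean_space set \<Rightarrow> ('a \<Rightarrow> real) \<Rightarrow> real" where
  "energy \<alpha> \<beta> p q lam \<Omega> u = \<alpha> / p * Lq_int_vec p \<Omega> (D q \<Omega> u) + \<beta> / q * Lq_int_vec q \<Omega> (D q \<Omega> u)
      - lam / q * Lq_int q \<Omega> u"

definition nehari :: "real \<Rightarrow> real \<Rightarrow> real \<Rightarrow> real \<Rightarrow> real \<Rightarrow> 'a::euclidean_space set \<Rightarrow> ('a \<Rightarrow> real) set" where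
  "nehari \<alpha> \<beta> p q lam \<Omega> = {u \<in> W0 q \<Omega>. Lq_int q \<Omega> u \<noteq> 0 \<and>
      \<alpha> * Lq_int_vec p \<Omega> (D q \<Omega> u) + \<beta> * Lq_int_vec q \<Omega> (D q \<Omega> u) = lam * Lq_int q \<Omega> u}"

definition m_lambda :: "real \<Rightarrow> real \<Rightarrow> real \<Rightarrow> real \<Rightarrow> real \<Rightarrow> 'a::euclidean_space set \<Rightarrow> real" where
  "m_lambda \<alpha> \<beta> p q lam \<Omega> = Inf (energy \<alpha> \<beta> p q lam \<Omega> ` nehari \<alpha> \<beta> p q lam \<Omega>)"

end

theory Submission
  imports Defs
begin

lemma test_fun_basic:
  assumes "test_fun \<Omega> \<phi>"
  shows "continuous_on UNIV \<phi>" "\<And>x. \<phi> differentiable (at x)"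
    "continuous_on UNIV (cgrad \<phi>)"
    "compact (closure {x. \<phi> x \<noteq> 0})" "closure {x. \<phi> x \<noteq> 0} \<subseteq> \<Omega>"
proof -
  have s: "\<forall>k. Ck k \<phi>" using assms unfolding test_fun_def smooth_fun_def by auto
  from s[rule_format, of 0] show "continuous_on UNIV \<phi>" by simp
  from s[rule_format, of 1] have c1: "(\<forall>x. \<phi> differentiable (at x))"
    "\<forall>i\<in>Basis. continuous_on UNIV (\<lambda>x. frechet_derivative \<phi> (at x) i)" by auto
  then show "\<And>x. \<phi> differentiable (at x)" by auto
  show "continuous_on UNIV (cgrad \<phi>)" unfolding cgrad_def
    using c1(2) by (intro continuous_intros) auto
  show "compact (closure {x. \<phi> x \<noteq> 0})" "closure {x. \<phi> x \<noteq> 0} \<subseteq> \<Omega>"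
    using assms unfolding test_fun_def by auto
qed

lemma fd_eq_cgrad:
  assumes "f differentiable (at x)"
  shows "frechet_derivative f (at x) y = cgrad f x \<bullet> y"
proof -
  have "linear (frechet_derivative f (at x))"
    using assms frechet_derivative_works has_derivative_linear by blast
  then have "frechet_derivative f (at x) y = (\<Sum>i\<in>Basis. (y \<bullet> i) * frechet_derivative f (at x) i)"
  proof -
    have "frechet_derivative f (at x) y = frechet_derivative f (at x) (\<Sum>i\<in>Basis. (y \<bullet> i) *\<^sub>R i)"
      by (simp add: euclidean_representation)
    also have "\<dots> = (\<Sum>i\<in>Basis. frechet_derivative f (at x) ((y \<bullet> i) *\<^sub>R i))"
      using linear_sum[OF \<open>linear _\<close>] by blast
    also have "\<dots> = (\<Sum>i\<in>Basis. (y \<bullet> i) * frechet_derivative f (at x) i)"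
      using linear_cmul[OF \<open>linear _\<close>] by simp
    finally show ?thesis .
  qed
  also have "\<dots> = cgrad f x \<bullet> y"
    unfolding cgrad_def by (simp add: inner_sum_right inner_commute mult.commute)
  finally show ?thesis .
qed

lemma cgrad_outside:
  assumes "x \<notin> closure {x. f x \<noteq> 0}"
  shows "cgrad f x = 0"
proof -
  let ?U = "- closure {x. f x \<noteq> (0::real)}"
  have "open ?U" by auto
  have "((\<lambda>_. 0::real) has_derivative (\<lambda>_. 0)) (at x)" by simp
  then have "(f has_derivative (\<lambda>_. 0)) (at x)"
    apply (rule has_derivative_transform_within_open[where s="?U"])
    using assms closure_subset by (auto simp: subset_eq)
  then have "frechet_derivative f (at x) = (\<lambda>_. 0)"
    using frechet_derivative_at by metis
  then show ?thesis unfolding cgrad_def by simp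
qed

lemma young_tangent:
  fixes q c f :: real
  assumes "q > 1" "c \<ge> 0" "f \<ge> 0"
  shows "q * c powr (q-1) * f \<le> f powr q + (q-1) * c powr q"
proof -
  have q': "q/(q-1) > 1" using assms by (simp add: field_simps)
  have e: "1/q + 1/(q/(q-1)) = 1" using assms by (simp add: field_simps)
  have "f * c powr (q-1) \<le> f powr q / q + (c powr (q-1)) powr (q/(q-1)) / (q/(q-1))"
    by (rule Youngs_inequality) (use assms q' e in auto)
  also have "(c powr (q-1)) powr (q/(q-1)) = c powr q"
    using assms by (simp add: powr_powr)
  finally have "f * c powr (q-1) \<le> f powr q / q + c powr q * (q-1) / q"
    by (simp add: field_simps)
  then have "q * (f * c powr (q-1)) \<le> q * (f powr q / q + c powr q * (q-1) / q)"
    using assms by (intro mult_left_mono) auto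
  moreover have "q * (f powr q / q + c powr q * (q-1) / q) = f powr q + (q-1) * c powr q"
    using assms by (simp add: field_simps)
  ultimately have "q * (f * c powr (q-1)) \<le> f powr q + (q-1) * c powr q" by linarith
  moreover have "q * c powr (q-1) * f = q * (f * c powr (q-1))" by (simp add: mult_ac)
  ultimately show ?thesis by linarith
qed

lemma jensen_nn:
  fixes f :: "'b::euclidean_space \<Rightarrow> real"
  assumes A: "A \<in> sets lborel" "emeasure lborel A = ennreal m" "m > 0"
    and f: "f \<in> borel_measurable lborel" "\<And>x. x\<in>A \<Longrightarrow> 0 \<le> f x" "\<And>x. x \<in> A \<Longrightarrow> f x \<le> Bd"
    and q: "q > 1"
  shows "(\<integral>\<^sup>+x. ennreal (indicator A x * f x) \<partial>lborel) < \<infinity>"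
    and "(\<integral>\<^sup>+x. ennreal (indicator A x * f x powr q) \<partial>lborel) < \<infinity>"
    and "enn2real (\<integral>\<^sup>+x. ennreal (indicator A x * f x) \<partial>lborel) powr q
         \<le> m powr (q-1) * enn2real (\<integral>\<^sup>+x. ennreal (indicator A x * f x powr q) \<partial>lborel)"
proof -
  have q0: "0 \<le> q" using q by simp
  have "A \<noteq> {}" using A by auto
  then obtain a where "a \<in> A" by auto
  then have Bd0: "0 \<le> Bd" using f by force
  have "(\<integral>\<^sup>+x. ennreal (indicator A x * f x) \<partial>lborel) \<le> (\<integral>\<^sup>+x. ennreal Bd * indicator A x \<partial>lborel)"
    by (intro nn_integral_mono) (auto split: split_indicator intro!: f ennreal_leI)
  also have "\<dots> = ennreal (Bd * m)" using A Bd0 by (simp add: nn_integral_cmult_indicator ennreal_mult)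
  finally have "(\<integral>\<^sup>+x. ennreal (indicator A x * f x) \<partial>lborel) \<le> ennreal (Bd * m)" .
  then show fin1: "(\<integral>\<^sup>+x. ennreal (indicator A x * f x) \<partial>lborel) < \<infinity>"
    by (simp add: le_less_trans)
  have "(\<integral>\<^sup>+x. ennreal (indicator A x * f x powr q) \<partial>lborel) \<le> (\<integral>\<^sup>+x. ennreal (Bd powr q) * indicator A x \<partial>lborel)"
    by (intro nn_integral_mono) (auto split: split_indicator intro!: powr_mono2 f ennreal_leI simp: q0)
  also have "\<dots> = ennreal (Bd powr q * m)" using A by (simp add: nn_integral_cmult_indicator ennreal_mult)
  finally have "(\<integral>\<^sup>+x. ennreal (indicator A x * f x powr q) \<partial>lborel) \<le> ennreal (Bd powr q * m)" .
  then show finq: "(\<integral>\<^sup>+x. ennreal (indicator A x * f x powr q) \<partial>lborel) < \<infinity>"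
    by (simp add: le_less_trans)
  define I1 where "I1 = enn2real (\<integral>\<^sup>+x. ennreal (indicator A x * f x) \<partial>lborel)"
  define Iq where "Iq = enn2real (\<integral>\<^sup>+x. ennreal (indicator A x * f x powr q) \<partial>lborel)"
  have I1: "(\<integral>\<^sup>+x. ennreal (indicator A x * f x) \<partial>lborel) = ennreal I1" "I1 \<ge> 0"
    using fin1 unfolding I1_def by (auto simp: enn2real_nonneg less_top)
  have Iq: "(\<integral>\<^sup>+x. ennreal (indicator A x * f x powr q) \<partial>lborel) = ennreal Iq" "Iq \<ge> 0"
    using finq unfolding Iq_def by (auto simp: less_top)
  define c where "c = I1 / m"
  have c0: "c \<ge> 0" using I1 A by (simp add: c_def)
  have pt: "ennreal (indicator A x * (q * c powr (q-1) * f x))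
      \<le> ennreal (indicator A x * f x powr q) + ennreal ((q-1) * c powr q) * indicator A x" for x
    using young_tangent[OF q c0, of "f x"] f(2)[of x] q
    by (auto split: split_indicator simp flip: ennreal_plus)
  have meas[measurable]: "(\<lambda>x. ennreal (indicator A x * f x powr q)) \<in> borel_measurable lborel"
    using f(1) A(1) by measurable
  have measr: "(\<lambda>x. indicator A x * f x powr q) \<in> borel_measurable borel"
    using f(1) A(1) by simp
  have meas1[measurable]: "(\<lambda>x. ennreal (indicator A x * f x)) \<in> borel_measurable lborel"
    using f(1) A(1) by measurable
  have "ennreal (q * c powr (q-1)) * ennreal I1 = (\<integral>\<^sup>+x. ennreal (q * c powr (q-1)) * ennreal (indicator A x * f x) \<partial>lborel)"
    by (subst nn_integral_cmult) (auto simp: I1)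
  also have "\<dots> = (\<integral>\<^sup>+x. ennreal (indicator A x * (q * c powr (q-1) * f x)) \<partial>lborel)"
    using q c0 f(2) by (intro nn_integral_cong) (auto simp: ennreal_mult split: split_indicator)
  also have "\<dots> \<le> (\<integral>\<^sup>+x. ennreal (indicator A x * f x powr q) + ennreal ((q-1) * c powr q) * indicator A x \<partial>lborel)"
    by (intro nn_integral_mono pt)
  also have "\<dots> = ennreal Iq + ennreal ((q-1) * c powr q) * ennreal m"
    using A measr by (subst nn_integral_add) (auto simp: Iq nn_integral_cmult_indicator)
  finally have "ennreal (q * c powr (q-1) * I1) \<le> ennreal (Iq + (q-1) * c powr q * m)"
    using q c0 I1 A Iq by (simp add: ennreal_mult ennreal_plus)
  then have ineq: "q * c powr (q-1) * I1 \<le> Iq + (q-1) * c powr q * m"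
    using q c0 Iq A by (subst (asm) ennreal_le_iff) auto
  have cI: "c powr (q-1) * I1 = c powr q * m"
  proof (cases "c = 0")
    case True then show ?thesis by simp
  next
    case False
    have "I1 = c * m" using A by (simp add: c_def)
    then have "c powr (q-1) * I1 = (c powr (q-1) * c powr 1) * m" using c0 by simp
    moreover have e: "c powr (q-1) * c powr 1 = c powr q" by (simp only: powr_add[symmetric]) simp
    ultimately show ?thesis by (metis mult.assoc)
  qed
  have h1: "q * (c powr (q-1) * I1) \<le> Iq + (q-1) * (c powr q * m)" using ineq by (simp add: mult_ac)
  have h2: "q * (c powr q * m) \<le> Iq + (q-1) * (c powr q * m)" using h1 unfolding cI .
  have h3: "c powr q * m = q * (c powr q * m) - (q-1) * (c powr q * m)" by (simp add: algebra_simps)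
  have "c powr q * m \<le> Iq" using h2 h3 by linarith
  moreover have "I1 powr q = (c powr q * m) * m powr (q-1)"
  proof -
    have "I1 powr q = (c * m) powr q" using A by (simp add: c_def)
    also have "\<dots> = c powr q * m powr q" using c0 A by (simp add: powr_mult)
    also have "m powr q = m powr 1 * m powr (q-1)" by (simp only: powr_add[symmetric]) simp
    also have "m powr 1 = m" using A by simp
    finally show ?thesis by (simp add: mult_ac)
  qed
  ultimately show "enn2real (\<integral>\<^sup>+x. ennreal (indicator A x * f x) \<partial>lborel) powr q
         \<le> m powr (q-1) * enn2real (\<integral>\<^sup>+x. ennreal (indicator A x * f x powr q) \<partial>lborel)"
    unfolding I1_def[symmetric] Iq_def[symmetric] using A
    by (simp add: mult.commute mult_left_mono)
qed

lemma ftc_real: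
  fixes \<phi> :: "'a::euclidean_space \<Rightarrow> real"
  assumes diff: "\<And>z. \<phi> differentiable (at z)" and cont: "continuous_on UNIV (cgrad \<phi>)"
  shows "\<bar>\<phi> (x + y) - \<phi> x\<bar> \<le> norm y * (\<integral>t. indicator {0..1::real} t * norm (cgrad \<phi> (x + t *\<^sub>R y)) \<partial>lborel)"
proof -
  define F where "F t = \<phi> (x + t *\<^sub>R y)" for t :: real
  define f where "f t = cgrad \<phi> (x + t *\<^sub>R y) \<bullet> y" for t :: real
  have cc: "continuous_on UNIV (\<lambda>t::real. cgrad \<phi> (x + t *\<^sub>R y))"
    by (rule continuous_on_compose2[OF cont]) (auto intro!: continuous_intros)
  have cf0: "continuous_on UNIV f" unfolding f_def
    by (intro continuous_on_inner cc continuous_on_const)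
  have cf: "continuous_on {0..1} f" using cf0 by (rule continuous_on_subset) simp
  have der: "(F has_vector_derivative f t) (at t within {0..1})" for t
  proof -
    have d1: "((\<lambda>t. x + t *\<^sub>R y) has_derivative (\<lambda>s. s *\<^sub>R y)) (at t within {0..1})"
      by (rule derivative_eq_intros refl)+ simp
    have d2: "(\<phi> has_derivative frechet_derivative \<phi> (at (x + t *\<^sub>R y))) (at (x + t *\<^sub>R y))"
      using diff frechet_derivative_works by blast
    have "((\<lambda>t. \<phi> (x + t *\<^sub>R y)) has_derivative (\<lambda>s. frechet_derivative \<phi> (at (x + t *\<^sub>R y)) (s *\<^sub>R y))) (at t within {0..1})"
      using has_derivative_compose[OF d1 d2] by simp
    moreover have "(\<lambda>s. frechet_derivative \<phi> (at (x + t *\<^sub>R y)) (s *\<^sub>R y)) = (\<lambda>s. s *\<^sub>R f t)"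
      unfolding f_def using fd_eq_cgrad[OF diff] by (auto simp: fun_eq_iff)
    ultimately show ?thesis unfolding has_vector_derivative_def F_def by simp
  qed
  have "integral\<^sup>L lborel (\<lambda>t. indicator {0..1} t *\<^sub>R f t) = F 1 - F 0"
    by (rule integral_FTC_atLeastAtMost) (use der cf in auto)
  then have eq: "\<phi> (x + y) - \<phi> x = (\<integral>t. indicator {0..1} t *\<^sub>R f t \<partial>lborel)"
    unfolding F_def by simp
  have int1: "integrable lborel (\<lambda>t. indicator {0..1::real} t *\<^sub>R f t)"
    by (rule borel_integrable_compact) (use cf in auto)
  have int2: "integrable lborel (\<lambda>t. indicator {0..1::real} t *\<^sub>R norm (cgrad \<phi> (x + t *\<^sub>R y)))"
    by (rule borel_integrable_compact) (use continuous_on_subset[OF continuous_on_norm[OF cc]] in auto)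
  have "\<bar>\<phi> (x + y) - \<phi> x\<bar> \<le> (\<integral>t. norm (indicator {0..1} t *\<^sub>R f t) \<partial>lborel)"
    unfolding eq using integral_norm_bound[of lborel "\<lambda>t. indicator {0..1::real} t *\<^sub>R f t"] by simp
  also have "\<dots> \<le> (\<integral>t. norm y * (indicator {0..1::real} t *\<^sub>R norm (cgrad \<phi> (x + t *\<^sub>R y))) \<partial>lborel)"
  proof (rule integral_mono)
    show "integrable lborel (\<lambda>t. norm (indicator {0..1::real} t *\<^sub>R f t))"
      using int1 by (rule integrable_norm)
    show "integrable lborel (\<lambda>t. norm y * (indicator {0..1::real} t *\<^sub>R norm (cgrad \<phi> (x + t *\<^sub>R y))))"
      using int2 by (rule integrable_mult_right)
    fix t :: real
    show "norm (indicator {0..1::real} t *\<^sub>R f t) \<le> norm y * (indicator {0..1::real} t *\<^sub>R norm (cgrad \<phi> (x + t *\<^sub>R y)))"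
      unfolding f_def using Cauchy_Schwarz_ineq2[of "cgrad \<phi> (x + t *\<^sub>R y)" y]
      by (auto split: split_indicator simp: mult.commute)
  qed
  also have "\<dots> = norm y * (\<integral>t. indicator {0..1::real} t * norm (cgrad \<phi> (x + t *\<^sub>R y)) \<partial>lborel)"
    by simp
  finally show ?thesis .
qed

lemma ftc_nn:
  fixes \<phi> :: "'a::euclidean_space \<Rightarrow> real"
  assumes diff: "\<And>z. \<phi> differentiable (at z)" and cont: "continuous_on UNIV (cgrad \<phi>)"
  shows "(\<integral>\<^sup>+t. ennreal (indicator {0..1::real} t * norm (cgrad \<phi> (x + t *\<^sub>R y))) \<partial>lborel)
      = ennreal (\<integral>t. indicator {0..1::real} t * norm (cgrad \<phi> (x + t *\<^sub>R y)) \<partial>lborel)"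
    and "ennreal \<bar>\<phi> (x + y) - \<phi> x\<bar> \<le> ennreal (norm y) * (\<integral>\<^sup>+t. ennreal (indicator {0..1::real} t * norm (cgrad \<phi> (x + t *\<^sub>R y))) \<partial>lborel)"
proof -
  have cc: "continuous_on UNIV (\<lambda>t::real. cgrad \<phi> (x + t *\<^sub>R y))"
    by (rule continuous_on_compose2[OF cont]) (auto intro!: continuous_intros)
  have int2: "integrable lborel (\<lambda>t. indicator {0..1::real} t *\<^sub>R norm (cgrad \<phi> (x + t *\<^sub>R y)))"
    by (rule borel_integrable_compact) (use continuous_on_subset[OF continuous_on_norm[OF cc]] in auto)
  show e: "(\<integral>\<^sup>+t. ennreal (indicator {0..1::real} t * norm (cgrad \<phi> (x + t *\<^sub>R y))) \<partial>lborel)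
      = ennreal (\<integral>t. indicator {0..1::real} t * norm (cgrad \<phi> (x + t *\<^sub>R y)) \<partial>lborel)"
    using int2 by (intro nn_integral_eq_integral) auto
  show "ennreal \<bar>\<phi> (x + y) - \<phi> x\<bar> \<le> ennreal (norm y) * (\<integral>\<^sup>+t. ennreal (indicator {0..1::real} t * norm (cgrad \<phi> (x + t *\<^sub>R y))) \<partial>lborel)"
    unfolding e using ftc_real[OF diff cont, of x y]
    by (simp add: ennreal_mult[symmetric] ennreal_leI)
qed

lemma nn_translate:
  fixes f :: "'a::euclidean_space \<Rightarrow> ennreal"
  assumes "f \<in> borel_measurable borel"
  shows "(\<integral>\<^sup>+x. f (x + c) \<partial>lborel) = (\<integral>\<^sup>+x. f x \<partial>lborel)"
proof -
  have "(\<integral>\<^sup>+x. f x \<partial>lborel) = (\<integral>\<^sup>+x. f x \<partial>(distr lborel borel ((+) c)))"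
    by (simp add: lborel_distr_plus)
  also have "\<dots> = (\<integral>\<^sup>+x. f (c + x) \<partial>lborel)"
    by (rule nn_integral_distr) (use assms in auto)
  finally show ?thesis by (simp add: add.commute)
qed

lemma fubini_lb:
  fixes H :: "'a::euclidean_space \<Rightarrow> 'b::euclidean_space \<Rightarrow> ennreal"
  assumes "(\<lambda>p. H (fst p) (snd p)) \<in> borel_measurable borel"
  shows "(\<integral>\<^sup>+x. (\<integral>\<^sup>+t. H x t \<partial>lborel) \<partial>lborel) = (\<integral>\<^sup>+t. (\<integral>\<^sup>+x. H x t \<partial>lborel) \<partial>lborel)"
proof -
  have "case_prod H \<in> borel_measurable (lborel \<Otimes>\<^sub>M lborel)"
    using assms by (simp add: lborel_prod case_prod_beta')
  then show ?thesis by (rule lborel_pair.Fubini'[symmetric])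
qed

lemma shift_integral_power:
  fixes \<phi> :: "'a::euclidean_space \<Rightarrow> real"
  assumes diff: "\<And>z. \<phi> differentiable (at z)" and cont: "continuous_on UNIV (cgrad \<phi>)"
    and r: "r > 0"
  shows "(\<integral>\<^sup>+x. (\<integral>\<^sup>+t. ennreal (indicator {0..1::real} t * norm (cgrad \<phi> (x + t *\<^sub>R y)) powr r) \<partial>lborel) \<partial>lborel)
     = (\<integral>\<^sup>+x. ennreal (norm (cgrad \<phi> x) powr r) \<partial>lborel)"
proof -
  have cc: "continuous_on UNIV (\<lambda>p::'a\<times>real. cgrad \<phi> (fst p + snd p *\<^sub>R y))"
    by (rule continuous_on_compose2[OF cont]) (auto intro!: continuous_intros)
  have cp: "continuous_on UNIV (\<lambda>p::'a\<times>real. norm (cgrad \<phi> (fst p + snd p *\<^sub>R y)) powr r)"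
    by (rule continuous_on_powr'[OF continuous_on_norm[OF cc] continuous_on_const]) (use r in auto)
  have cG: "continuous_on UNIV (\<lambda>x. norm (cgrad \<phi> x) powr r)"
    by (rule continuous_on_powr'[OF continuous_on_norm[OF cont] continuous_on_const]) (use r in auto)
  have mG: "(\<lambda>x. ennreal (norm (cgrad \<phi> x) powr r)) \<in> borel_measurable borel"
    using borel_measurable_continuous_onI[OF cG] by measurable
  have "(\<integral>\<^sup>+x. (\<integral>\<^sup>+t. ennreal (indicator {0..1::real} t * norm (cgrad \<phi> (x + t *\<^sub>R y)) powr r) \<partial>lborel) \<partial>lborel)
      = (\<integral>\<^sup>+t. (\<integral>\<^sup>+x. ennreal (indicator {0..1::real} t * norm (cgrad \<phi> (x + t *\<^sub>R y)) powr r) \<partial>lborel) \<partial>lborel)"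
  proof (rule fubini_lb)
    have "(\<lambda>p::'a\<times>real. norm (cgrad \<phi> (fst p + snd p *\<^sub>R y)) powr r) \<in> borel_measurable borel"
      using cp by (rule borel_measurable_continuous_onI)
    moreover have "(\<lambda>p::'a\<times>real. indicator (UNIV \<times> {0..1::real}) p :: real) \<in> borel_measurable borel"
      by (rule borel_measurable_indicator) (auto intro: borel_closed closed_Times)
    ultimately have "(\<lambda>p::'a\<times>real. indicator (UNIV \<times> {0..1::real}) p * norm (cgrad \<phi> (fst p + snd p *\<^sub>R y)) powr r) \<in> borel_measurable borel"
      by (intro borel_measurable_times)
    then have "(\<lambda>p::'a\<times>real. ennreal (indicator (UNIV \<times> {0..1::real}) p * norm (cgrad \<phi> (fst p + snd p *\<^sub>R y)) powr r)) \<in> borel_measurable borel"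
      by (rule measurable_compose[OF _ measurable_ennreal])
    moreover have "(\<lambda>p::'a\<times>real. indicator (UNIV \<times> {0..1::real}) p :: real) = (\<lambda>p. indicator {0..1::real} (snd p))"
      by (auto simp: fun_eq_iff split: split_indicator)
    ultimately show "(\<lambda>p::'a\<times>real. ennreal (indicator {0..1::real} (snd p) * norm (cgrad \<phi> (fst p + snd p *\<^sub>R y)) powr r)) \<in> borel_measurable borel"
      by simp
  qed
  also have "\<dots> = (\<integral>\<^sup>+t. indicator {0..1::real} t * (\<integral>\<^sup>+x. ennreal (norm (cgrad \<phi> x) powr r) \<partial>lborel) \<partial>lborel)"
  proof (rule nn_integral_cong)
    fix t :: real
    have "(\<integral>\<^sup>+x. ennreal (indicator {0..1::real} t * norm (cgrad \<phi> (x + t *\<^sub>R y)) powr r) \<partial>lborel)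
       = (\<integral>\<^sup>+x. indicator {0..1::real} t * ennreal (norm (cgrad \<phi> (x + t *\<^sub>R y)) powr r) \<partial>lborel)"
      by (intro nn_integral_cong) (auto split: split_indicator)
    also have "\<dots> = indicator {0..1::real} t * (\<integral>\<^sup>+x. ennreal (norm (cgrad \<phi> (x + t *\<^sub>R y)) powr r) \<partial>lborel)"
      by (rule nn_integral_cmult) (use mG in \<open>auto intro: measurable_compose\<close>)
    also have "(\<integral>\<^sup>+x. ennreal (norm (cgrad \<phi> (x + t *\<^sub>R y)) powr r) \<partial>lborel) = (\<integral>\<^sup>+x. ennreal (norm (cgrad \<phi> x) powr r) \<partial>lborel)"
      using nn_translate[OF mG, of "t *\<^sub>R y"] by simp
    finally show "(\<integral>\<^sup>+x. ennreal (indicator {0..1::real} t * norm (cgrad \<phi> (x + t *\<^sub>R y)) powr r) \<partial>lborel) =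
         indicator {0..1::real} t * (\<integral>\<^sup>+x. ennreal (norm (cgrad \<phi> x) powr r) \<partial>lborel)" .
  qed
  also have "\<dots> = (\<integral>\<^sup>+x. ennreal (norm (cgrad \<phi> x) powr r) \<partial>lborel)"
    by (subst mult.commute, subst nn_integral_cmult_indicator) auto
  finally show ?thesis .
qed

lemma meas_H:
  fixes \<phi> :: "'a::euclidean_space \<Rightarrow> real"
  assumes cont: "continuous_on UNIV (cgrad \<phi>)" and r: "r > 0"
  shows "(\<lambda>p::'a\<times>real. ennreal (indicator {0..1::real} (snd p) * norm (cgrad \<phi> (fst p + snd p *\<^sub>R y)) powr r)) \<in> borel_measurable borel"
proof -
  have cc: "continuous_on UNIV (\<lambda>p::'a\<times>real. cgrad \<phi> (fst p + snd p *\<^sub>R y))"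
    by (rule continuous_on_compose2[OF cont]) (auto intro!: continuous_intros)
  have cp: "continuous_on UNIV (\<lambda>p::'a\<times>real. norm (cgrad \<phi> (fst p + snd p *\<^sub>R y)) powr r)"
    by (rule continuous_on_powr'[OF continuous_on_norm[OF cc] continuous_on_const]) (use r in auto)
  have "(\<lambda>p::'a\<times>real. norm (cgrad \<phi> (fst p + snd p *\<^sub>R y)) powr r) \<in> borel_measurable borel"
    using cp by (rule borel_measurable_continuous_onI)
  moreover have "(\<lambda>p::'a\<times>real. indicator (UNIV \<times> {0..1::real}) p :: real) \<in> borel_measurable borel"
    by (rule borel_measurable_indicator) (auto intro: borel_closed closed_Times)
  ultimately have "(\<lambda>p::'a\<times>real. indicator (UNIV \<times> {0..1::real}) p * norm (cgrad \<phi> (fst p + snd p *\<^sub>R y)) powr r) \<in> borel_measurable borel"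
    by (intro borel_measurable_times)
  then have "(\<lambda>p::'a\<times>real. ennreal (indicator (UNIV \<times> {0..1::real}) p * norm (cgrad \<phi> (fst p + snd p *\<^sub>R y)) powr r)) \<in> borel_measurable borel"
    by (rule measurable_compose[OF _ measurable_ennreal])
  moreover have "(\<lambda>p::'a\<times>real. indicator (UNIV \<times> {0..1::real}) p :: real) = (\<lambda>p. indicator {0..1::real} (snd p))"
    by (auto simp: fun_eq_iff split: split_indicator)
  ultimately show ?thesis by simp
qed

lemma meas_J:
  fixes \<phi> :: "'a::euclidean_space \<Rightarrow> real"
  assumes cont: "continuous_on UNIV (cgrad \<phi>)" and r: "r > 0"
  shows "(\<lambda>x. \<integral>\<^sup>+t. ennreal (indicator {0..1::real} t * norm (cgrad \<phi> (x + t *\<^sub>R y)) powr r) \<partial>lborel) \<in> borel_measurable lborel"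
proof (rule lborel.borel_measurable_nn_integral)
  show "(\<lambda>(x, t). ennreal (indicator {0..1::real} t * norm (cgrad \<phi> (x + t *\<^sub>R y)) powr r)) \<in> borel_measurable (lborel \<Otimes>\<^sub>M lborel)"
    using meas_H[OF cont r, of y] by (simp add: lborel_prod case_prod_beta')
qed

lemma diff_int_power:
  fixes \<phi> :: "'a::euclidean_space \<Rightarrow> real"
  assumes diff: "\<And>z. \<phi> differentiable (at z)" and cont: "continuous_on UNIV (cgrad \<phi>)"
    and Bg: "\<And>z. norm (cgrad \<phi> z) \<le> Bg" and q: "q > 1"
  shows "(\<integral>\<^sup>+x. ennreal (\<bar>\<phi> (x + y) - \<phi> x\<bar> powr q) \<partial>lborel)
     \<le> ennreal (norm y powr q) * (\<integral>\<^sup>+x. ennreal (norm (cgrad \<phi> x) powr q) \<partial>lborel)"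
proof -
  define J where "J x = (\<integral>\<^sup>+t. ennreal (indicator {0..1::real} t * norm (cgrad \<phi> (x + t *\<^sub>R y)) powr q) \<partial>lborel)" for x
  have pt: "ennreal (\<bar>\<phi> (x + y) - \<phi> x\<bar> powr q) \<le> ennreal (norm y powr q) * J x" for x
  proof -
    define S where "S = (\<integral>t. indicator {0..1::real} t * norm (cgrad \<phi> (x + t *\<^sub>R y)) \<partial>lborel)"
    have S0: "S \<ge> 0" unfolding S_def by (rule integral_nonneg_AE) auto
    have eS: "(\<integral>\<^sup>+t. ennreal (indicator {0..1::real} t * norm (cgrad \<phi> (x + t *\<^sub>R y))) \<partial>lborel) = ennreal S"
      unfolding S_def by (rule ftc_nn(1)[OF diff cont])
    have cc: "continuous_on UNIV (\<lambda>t::real. cgrad \<phi> (x + t *\<^sub>R y))"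
      by (rule continuous_on_compose2[OF cont]) (auto intro!: continuous_intros)
    have mf: "(\<lambda>t. norm (cgrad \<phi> (x + t *\<^sub>R y))) \<in> borel_measurable lborel"
      using borel_measurable_continuous_onI[OF continuous_on_norm[OF cc]] by simp
    note jen = jensen_nn[where A="{0..1::real}" and m=1 and f="\<lambda>t. norm (cgrad \<phi> (x + t *\<^sub>R y))" and Bd=Bg and q=q,
        OF _ _ _ mf _ Bg q]
    have Jfin: "J x < \<infinity>" unfolding J_def by (rule jen(2)) auto
    have SJ: "S powr q \<le> enn2real (J x)"
      using jen(3) eS S0 unfolding J_def by simp
    have "\<bar>\<phi> (x + y) - \<phi> x\<bar> \<le> norm y * S" unfolding S_def by (rule ftc_real[OF diff cont])
    then have "\<bar>\<phi> (x + y) - \<phi> x\<bar> powr q \<le> (norm y * S) powr q"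
      using q by (intro powr_mono2) auto
    also have "\<dots> = norm y powr q * S powr q" using S0 by (simp add: powr_mult)
    also have "\<dots> \<le> norm y powr q * enn2real (J x)" using SJ by (intro mult_left_mono) auto
    finally have "ennreal (\<bar>\<phi> (x + y) - \<phi> x\<bar> powr q) \<le> ennreal (norm y powr q * enn2real (J x))"
      by (rule ennreal_leI)
    also have "\<dots> = ennreal (norm y powr q) * J x"
      using Jfin by (simp add: ennreal_mult less_top)
    finally show ?thesis .
  qed
  have "(\<integral>\<^sup>+x. ennreal (\<bar>\<phi> (x + y) - \<phi> x\<bar> powr q) \<partial>lborel) \<le> (\<integral>\<^sup>+x. ennreal (norm y powr q) * J x \<partial>lborel)"
    by (intro nn_integral_mono pt)
  also have "\<dots> = ennreal (norm y powr q) * (\<integral>\<^sup>+x. J x \<partial>lborel)"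
    by (rule nn_integral_cmult) (unfold J_def, rule meas_J[OF cont], use q in simp)
  also have "(\<integral>\<^sup>+x. J x \<partial>lborel) = (\<integral>\<^sup>+x. ennreal (norm (cgrad \<phi> x) powr q) \<partial>lborel)"
    unfolding J_def by (rule shift_integral_power[OF diff cont]) (use q in simp)
  finally show ?thesis .
qed

lemma diff_int_1:
  fixes \<phi> :: "'a::euclidean_space \<Rightarrow> real"
  assumes diff: "\<And>z. \<phi> differentiable (at z)" and cont: "continuous_on UNIV (cgrad \<phi>)"
  shows "(\<integral>\<^sup>+x. ennreal \<bar>\<phi> (x + y) - \<phi> x\<bar> \<partial>lborel)
     \<le> ennreal (norm y) * (\<integral>\<^sup>+x. ennreal (norm (cgrad \<phi> x)) \<partial>lborel)"
proof -
  define J where "J x = (\<integral>\<^sup>+t. ennreal (indicator {0..1::real} t * norm (cgrad \<phi> (x + t *\<^sub>R y)) powr 1) \<partial>lborel)" for x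
  have pt: "ennreal \<bar>\<phi> (x + y) - \<phi> x\<bar> \<le> ennreal (norm y) * J x" for x
    unfolding J_def using ftc_nn(2)[OF diff cont, of x y] by simp
  have "(\<integral>\<^sup>+x. ennreal \<bar>\<phi> (x + y) - \<phi> x\<bar> \<partial>lborel) \<le> (\<integral>\<^sup>+x. ennreal (norm y) * J x \<partial>lborel)"
    by (intro nn_integral_mono pt)
  also have "\<dots> = ennreal (norm y) * (\<integral>\<^sup>+x. J x \<partial>lborel)"
    by (rule nn_integral_cmult) (unfold J_def, rule meas_J[OF cont], simp)
  also have "(\<integral>\<^sup>+x. J x \<partial>lborel) = (\<integral>\<^sup>+x. ennreal (norm (cgrad \<phi> x) powr 1) \<partial>lborel)"
    unfolding J_def by (rule shift_integral_power[OF diff cont]) simp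
  finally show ?thesis by simp
qed

lemma meas_prod_ind:
  fixes F :: "'a::euclidean_space \<times> 'b::euclidean_space \<Rightarrow> real"
  assumes "continuous_on UNIV F" "closed S"
  shows "(\<lambda>p. ennreal (indicator S (snd p) * F p)) \<in> borel_measurable borel"
proof -
  have "F \<in> borel_measurable borel" using assms(1) by (rule borel_measurable_continuous_onI)
  moreover have "(\<lambda>p::'a\<times>'b. indicator (UNIV \<times> S) p :: real) \<in> borel_measurable borel"
    by (rule borel_measurable_indicator) (use assms(2) in \<open>auto intro: borel_closed closed_Times\<close>)
  ultimately have "(\<lambda>p::'a\<times>'b. indicator (UNIV \<times> S) p * F p) \<in> borel_measurable borel"
    by (intro borel_measurable_times)
  then have "(\<lambda>p::'a\<times>'b. ennreal (indicator (UNIV \<times> S) p * F p)) \<in> borel_measurable borel"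
    by (rule measurable_compose[OF _ measurable_ennreal])
  moreover have "(\<lambda>p::'a\<times>'b. indicator (UNIV \<times> S) p :: real) = (\<lambda>p. indicator S (snd p))"
    by (auto simp: fun_eq_iff split: split_indicator)
  ultimately show ?thesis by simp
qed

lemma cball_measure:
  assumes "h > 0"
  shows "emeasure lborel (cball (0::'a::euclidean_space) h) = ennreal (measure lborel (cball (0::'a) h))"
    and "measure lborel (cball (0::'a) h) > 0"
proof -
  show "emeasure lborel (cball (0::'a::euclidean_space) h) = ennreal (measure lborel (cball (0::'a) h))"
  proof (rule emeasure_eq_ennreal_measure)
    show "emeasure lborel (cball (0::'a) h) \<noteq> top"
      using emeasure_lborel_cball_finite[of "0::'a" h] by simp
  qed
  have "measure lborel (cball (0::'a) h) = unit_ball_vol (DIM('a)) * h ^ DIM('a)"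
    unfolding measure_def using assms by (simp add: emeasure_cball)
  then show "measure lborel (cball (0::'a) h) > 0" using assms by simp
qed

lemma avg_diff:
  fixes \<phi> :: "'a::euclidean_space \<Rightarrow> real"
  assumes diff: "\<And>z. \<phi> differentiable (at z)" and cont: "continuous_on UNIV (cgrad \<phi>)"
    and contf: "continuous_on UNIV \<phi>"
    and Bf: "\<And>z. \<bar>\<phi> z\<bar> \<le> Bf" and Bg: "\<And>z. norm (cgrad \<phi> z) \<le> Bg" and q: "q > 1" and h: "h > 0"
  defines "m \<equiv> measure lborel (cball (0::'a) h)"
  shows "(\<integral>\<^sup>+x. ennreal (\<bar>\<phi> x - (\<integral>y. indicator (cball 0 h) y * \<phi> (x + y) \<partial>lborel) / m\<bar> powr q) \<partial>lborel)
     \<le> ennreal (h powr q) * (\<integral>\<^sup>+x. ennreal (norm (cgrad \<phi> x) powr q) \<partial>lborel)"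
proof -
  let ?B = "cball (0::'a) h"
  have eB: "emeasure lborel ?B = ennreal m" and m0: "m > 0"
    unfolding m_def using cball_measure[OF h] by auto
  have q0: "q \<ge> 0" using q by simp
  define H where "H x y = ennreal (indicator ?B y * \<bar>\<phi> (x + y) - \<phi> x\<bar> powr q)" for x y
  define J2 where "J2 x = (\<integral>\<^sup>+y. H x y \<partial>lborel)" for x
  have cF: "continuous_on UNIV (\<lambda>p::'a\<times>'a. \<bar>\<phi> (fst p + snd p) - \<phi> (fst p)\<bar> powr q)"
  proof -
    have "continuous_on UNIV (\<lambda>p::'a\<times>'a. \<phi> (fst p + snd p))"
      by (rule continuous_on_compose2[OF contf]) (auto intro!: continuous_intros)
    moreover have "continuous_on UNIV (\<lambda>p::'a\<times>'a. \<phi> (fst p))"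
      by (rule continuous_on_compose2[OF contf]) (auto intro!: continuous_intros)
    ultimately have "continuous_on UNIV (\<lambda>p::'a\<times>'a. \<bar>\<phi> (fst p + snd p) - \<phi> (fst p)\<bar>)"
      by (intro continuous_on_rabs continuous_on_diff)
    then show ?thesis by (rule continuous_on_powr'[OF _ continuous_on_const]) (use q in auto)
  qed
  have mH: "(\<lambda>p. H (fst p) (snd p)) \<in> borel_measurable borel"
    unfolding H_def using meas_prod_ind[OF cF, of ?B] by simp
  have mJ2: "J2 \<in> borel_measurable lborel"
    unfolding J2_def
    by (rule lborel.borel_measurable_nn_integral) (use mH in \<open>simp add: lborel_prod case_prod_beta'\<close>)
  have pt: "ennreal (\<bar>\<phi> x - (\<integral>y. indicator ?B y * \<phi> (x + y) \<partial>lborel) / m\<bar> powr q) \<le> ennreal (1/m) * J2 x" for x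
  proof -
    have cy: "continuous_on UNIV (\<lambda>y. \<phi> (x + y))"
      by (rule continuous_on_compose2[OF contf]) (auto intro!: continuous_intros)
    have cD: "continuous_on UNIV (\<lambda>y. \<bar>\<phi> (x + y) - \<phi> x\<bar>)"
      using cy by (intro continuous_intros) auto
    have int1: "integrable lborel (\<lambda>y. indicator ?B y * \<phi> (x + y))"
      using borel_integrable_compact[OF compact_cball continuous_on_subset[OF cy subset_UNIV]] by simp
    have int2: "integrable lborel (\<lambda>y. indicator ?B y * \<bar>\<phi> (x + y) - \<phi> x\<bar>)"
      using borel_integrable_compact[OF compact_cball continuous_on_subset[OF cD subset_UNIV]] by simp
    have int3: "integrable lborel (\<lambda>y. indicator ?B y * \<phi> x)"
      using emeasure_lborel_cball_finite[of "0::'a" h] by (intro integrable_mult_left integrable_real_indicator) auto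
    have i3': "(\<integral>y. indicator ?B y * \<phi> x \<partial>lborel) = measure lborel ?B * \<phi> x"
      by simp
    have i3: "(\<integral>y. indicator ?B y * \<phi> x \<partial>lborel) = m * \<phi> x"
      using i3' unfolding m_def .
    have "\<phi> x - (\<integral>y. indicator ?B y * \<phi> (x + y) \<partial>lborel) / m
        = (m * \<phi> x - (\<integral>y. indicator ?B y * \<phi> (x + y) \<partial>lborel)) / m"
      using m0 by (simp add: field_simps)
    also have "\<dots> = ((\<integral>y. indicator ?B y * \<phi> x \<partial>lborel) - (\<integral>y. indicator ?B y * \<phi> (x + y) \<partial>lborel)) / m"
      by (simp only: i3)
    also have "\<dots> = (\<integral>y. indicator ?B y * (\<phi> x - \<phi> (x + y)) \<partial>lborel) / m"
      using int1 int3 by (simp add: Bochner_Integration.integral_diff[symmetric] algebra_simps)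
    finally have e1: "\<phi> x - (\<integral>y. indicator ?B y * \<phi> (x + y) \<partial>lborel) / m
        = (\<integral>y. indicator ?B y * (\<phi> x - \<phi> (x + y)) \<partial>lborel) / m" .
    define T where "T = (\<integral>y. indicator ?B y * \<bar>\<phi> (x + y) - \<phi> x\<bar> \<partial>lborel)"
    have T0: "T \<ge> 0" unfolding T_def by (rule integral_nonneg_AE) auto
    have "\<bar>\<integral>y. indicator ?B y * (\<phi> x - \<phi> (x + y)) \<partial>lborel\<bar> \<le> (\<integral>y. norm (indicator ?B y * (\<phi> x - \<phi> (x + y))) \<partial>lborel)"
      using integral_norm_bound[of lborel "\<lambda>y. indicator ?B y * (\<phi> x - \<phi> (x + y))"] by simp
    also have "\<dots> = T" unfolding T_def
      by (intro Bochner_Integration.integral_cong) (auto split: split_indicator)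
    finally have aT: "\<bar>\<integral>y. indicator ?B y * (\<phi> x - \<phi> (x + y)) \<partial>lborel\<bar> \<le> T" .
    have eT: "(\<integral>\<^sup>+y. ennreal (indicator ?B y * \<bar>\<phi> (x + y) - \<phi> x\<bar>) \<partial>lborel) = ennreal T"
      unfolding T_def using int2 by (intro nn_integral_eq_integral) auto
    have mf: "(\<lambda>y. \<bar>\<phi> (x + y) - \<phi> x\<bar>) \<in> borel_measurable lborel"
      using borel_measurable_continuous_onI[OF cD] by simp
    have bnd: "\<bar>\<phi> (x + y) - \<phi> x\<bar> \<le> 2 * Bf" for y
      using Bf[of "x+y"] Bf[of x] by linarith
    note jen = jensen_nn[where A="?B" and m=m and f="\<lambda>y. \<bar>\<phi> (x + y) - \<phi> x\<bar>" and Bd="2*Bf" and q=q,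
        OF _ eB m0 mf _ bnd q]
    have Jfin: "J2 x < \<infinity>" unfolding J2_def H_def by (rule jen(2)) auto
    have TJ: "T powr q \<le> m powr (q-1) * enn2real (J2 x)"
      using jen(3) eT T0 unfolding J2_def H_def by simp
    have "\<bar>\<phi> x - (\<integral>y. indicator ?B y * \<phi> (x + y) \<partial>lborel) / m\<bar> \<le> T / m"
      unfolding e1 using aT m0 by (simp add: divide_right_mono)
    then have "\<bar>\<phi> x - (\<integral>y. indicator ?B y * \<phi> (x + y) \<partial>lborel) / m\<bar> powr q \<le> (T / m) powr q"
      using q0 by (intro powr_mono2) auto
    also have "\<dots> = T powr q / m powr q" using T0 m0 by (simp add: powr_divide)
    also have "\<dots> \<le> m powr (q-1) * enn2real (J2 x) / m powr q"
      using TJ m0 by (intro divide_right_mono) auto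
    also have "\<dots> = (1/m) * enn2real (J2 x)"
    proof -
      have "m powr (q-1) = m powr q / m" using m0 by (simp add: powr_diff)
      then show ?thesis using m0 by simp
    qed
    finally have "ennreal (\<bar>\<phi> x - (\<integral>y. indicator ?B y * \<phi> (x + y) \<partial>lborel) / m\<bar> powr q) \<le> ennreal ((1/m) * enn2real (J2 x))"
      by (rule ennreal_leI)
    also have "\<dots> = ennreal (1/m) * ennreal (enn2real (J2 x))"
      using m0 by (intro ennreal_mult) auto
    also have "ennreal (enn2real (J2 x)) = J2 x" using Jfin by (simp add: less_top)
    finally show ?thesis .
  qed
  have "(\<integral>\<^sup>+x. ennreal (\<bar>\<phi> x - (\<integral>y. indicator ?B y * \<phi> (x + y) \<partial>lborel) / m\<bar> powr q) \<partial>lborel)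
      \<le> (\<integral>\<^sup>+x. ennreal (1/m) * J2 x \<partial>lborel)"
    by (intro nn_integral_mono pt)
  also have "\<dots> = ennreal (1/m) * (\<integral>\<^sup>+x. J2 x \<partial>lborel)"
    by (rule nn_integral_cmult[OF mJ2])
  also have "(\<integral>\<^sup>+x. J2 x \<partial>lborel) = (\<integral>\<^sup>+y. (\<integral>\<^sup>+x. H x y \<partial>lborel) \<partial>lborel)"
    unfolding J2_def by (rule fubini_lb[OF mH])
  also have "\<dots> \<le> (\<integral>\<^sup>+y. (ennreal (h powr q) * (\<integral>\<^sup>+x. ennreal (norm (cgrad \<phi> x) powr q) \<partial>lborel)) * indicator ?B y \<partial>lborel)"
  proof (rule nn_integral_mono)
    fix y :: 'a
    have mD: "(\<lambda>x. ennreal (\<bar>\<phi> (x + y) - \<phi> x\<bar> powr q)) \<in> borel_measurable lborel"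
    proof -
      have "continuous_on UNIV (\<lambda>x. \<bar>\<phi> (x + y) - \<phi> x\<bar> powr q)"
      proof -
        have "continuous_on UNIV (\<lambda>x::'a. (x, y))" by (intro continuous_intros)
        from continuous_on_compose2[OF cF this] show ?thesis by simp
      qed
      then have "(\<lambda>x. \<bar>\<phi> (x + y) - \<phi> x\<bar> powr q) \<in> borel_measurable borel"
        by (rule borel_measurable_continuous_onI)
      then have "(\<lambda>x. ennreal (\<bar>\<phi> (x + y) - \<phi> x\<bar> powr q)) \<in> borel_measurable borel"
        by (rule measurable_compose[OF _ measurable_ennreal])
      then show ?thesis by simp
    qed
    have "(\<integral>\<^sup>+x. H x y \<partial>lborel) = (\<integral>\<^sup>+x. indicator ?B y * ennreal (\<bar>\<phi> (x + y) - \<phi> x\<bar> powr q) \<partial>lborel)"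
      unfolding H_def by (intro nn_integral_cong) (auto split: split_indicator)
    also have "\<dots> = indicator ?B y * (\<integral>\<^sup>+x. ennreal (\<bar>\<phi> (x + y) - \<phi> x\<bar> powr q) \<partial>lborel)"
      by (rule nn_integral_cmult[OF mD])
    also have "\<dots> \<le> indicator ?B y * (ennreal (norm y powr q) * (\<integral>\<^sup>+x. ennreal (norm (cgrad \<phi> x) powr q) \<partial>lborel))"
      by (intro mult_left_mono diff_int_power[OF diff cont Bg q]) auto
    also have "\<dots> \<le> (ennreal (h powr q) * (\<integral>\<^sup>+x. ennreal (norm (cgrad \<phi> x) powr q) \<partial>lborel)) * indicator ?B y"
    proof (cases "y \<in> ?B")
      case True
      then have "norm y powr q \<le> h powr q" using q0 by (intro powr_mono2) auto
      then have "ennreal (norm y powr q) \<le> ennreal (h powr q)" by (rule ennreal_leI)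
      then show ?thesis using True by (simp add: mult_right_mono)
    qed auto
    finally show "(\<integral>\<^sup>+x. H x y \<partial>lborel) \<le> (ennreal (h powr q) * (\<integral>\<^sup>+x. ennreal (norm (cgrad \<phi> x) powr q) \<partial>lborel)) * indicator ?B y" .
  qed
  also have "\<dots> = (ennreal (h powr q) * (\<integral>\<^sup>+x. ennreal (norm (cgrad \<phi> x) powr q) \<partial>lborel)) * ennreal m"
    by (subst nn_integral_cmult_indicator) (auto simp: eB)
  finally have "(\<integral>\<^sup>+x. ennreal (\<bar>\<phi> x - (\<integral>y. indicator ?B y * \<phi> (x + y) \<partial>lborel) / m\<bar> powr q) \<partial>lborel)
      \<le> ennreal (1/m) * ((ennreal (h powr q) * (\<integral>\<^sup>+x. ennreal (norm (cgrad \<phi> x) powr q) \<partial>lborel)) * ennreal m)"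
    by (simp add: mult_left_mono)
  also have "\<dots> = (ennreal (1/m) * ennreal m) * (ennreal (h powr q) * (\<integral>\<^sup>+x. ennreal (norm (cgrad \<phi> x) powr q) \<partial>lborel))"
    by (simp add: mult_ac)
  also have "ennreal (1/m) * ennreal m = 1" using m0 by (simp flip: ennreal_mult)
  finally show ?thesis by simp
qed

lemma pow2_ineq:
  fixes s t r :: real
  assumes "s \<ge> 0" "t \<ge> 0" "r > 0"
  shows "(s + t) powr r \<le> 2 powr r * (s powr r + t powr r)"
proof -
  have "(s + t) powr r \<le> (2 * max s t) powr r" using assms by (intro powr_mono2) auto
  also have "\<dots> = 2 powr r * max s t powr r" using assms by (simp add: powr_mult)
  also have "max s t powr r \<le> s powr r + t powr r" using assms by (auto simp: max_def)
  finally show ?thesis by simp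
qed

lemma int_Omega_eq:
  assumes "\<And>x. x \<notin> \<Omega> \<Longrightarrow> f x = 0"
  shows "(\<integral>\<^sup>+x. f x \<partial>lborel) = (\<integral>\<^sup>+x\<in>\<Omega>. f x \<partial>lborel)"
  using assms by (intro nn_integral_cong) (auto split: split_indicator)

lemma int_Omega_bound:
  fixes f :: "'a::euclidean_space \<Rightarrow> real"
  assumes "\<Omega> \<in> sets lborel" "emeasure lborel \<Omega> = ennreal W" "\<And>x. x \<in> \<Omega> \<Longrightarrow> f x \<le> B" "B \<ge> 0"
  shows "(\<integral>\<^sup>+x\<in>\<Omega>. ennreal (f x) \<partial>lborel) \<le> ennreal (B * W)"
proof -
  have "(\<integral>\<^sup>+x\<in>\<Omega>. ennreal (f x) \<partial>lborel) \<le> (\<integral>\<^sup>+x. ennreal B * indicator \<Omega> x \<partial>lborel)"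
    using assms by (intro nn_integral_mono) (auto split: split_indicator intro!: ennreal_leI)
  also have "\<dots> = ennreal (B * W)" using assms
    by (simp add: nn_integral_cmult_indicator ennreal_mult')
  finally show ?thesis .
qed

lemma test_ineq:
  fixes \<phi> :: "'a::euclidean_space \<Rightarrow> real" and \<Omega> :: "'a set"
  assumes diff: "\<And>z. \<phi> differentiable (at z)" and cont: "continuous_on UNIV (cgrad \<phi>)"
    and contf: "continuous_on UNIV \<phi>"
    and s1: "\<And>x. x \<notin> \<Omega> \<Longrightarrow> \<phi> x = 0" and s2: "\<And>x. x \<notin> \<Omega> \<Longrightarrow> cgrad \<phi> x = 0"
    and Bf: "\<And>z. \<bar>\<phi> z\<bar> \<le> Bf" and Bg: "\<And>z. norm (cgrad \<phi> z) \<le> Bg"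
    and Om: "\<Omega> \<in> sets lborel" "emeasure lborel \<Omega> = ennreal W" "W > 0" and R: "\<Omega> \<subseteq> ball 0 R"
    and p: "1 < p" and pq: "p < q" and h: "h > 0"
  defines "m \<equiv> measure lborel (cball (0::'a) h)"
  shows "Lq_int q \<Omega> \<phi> \<le> 2 powr q * (h powr q * Lq_int_vec q \<Omega> (cgrad \<phi>)
          + W * (2 * R / m) powr q * (W powr (p-1) * Lq_int_vec p \<Omega> (cgrad \<phi>)) powr (q/p))"
proof -
  have q: "q > 1" using p pq by simp
  have q0: "q > 0" using q by simp
  have p0: "p > 0" using p by simp
  have m0: "m > 0" unfolding m_def using cball_measure[OF h] by simp
  have "\<Omega> \<noteq> {}" using Om by auto
  then obtain x0 where "x0 \<in> \<Omega>" by auto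
  then have R0: "R > 0" using R by (smt (verit) mem_ball_0 norm_ge_zero subsetD)
  have Bf0: "Bf \<ge> 0" using Bf[of 0] by simp
  have Bg0: "Bg \<ge> 0" using norm_ge_zero[of "cgrad \<phi> 0"] Bg[of 0] by linarith
  define A where "A x = (\<integral>y. indicator (cball 0 h) y * \<phi> (x + y) \<partial>lborel) / m" for x
  define G where "G x = norm (cgrad \<phi> x)" for x
  have G0: "\<And>x. x \<notin> \<Omega> \<Longrightarrow> G x = 0" unfolding G_def using s2 by simp
  define IqG where "IqG = Lq_int_vec q \<Omega> (cgrad \<phi>)"
  define IpG where "IpG = Lq_int_vec p \<Omega> (cgrad \<phi>)"
  have IqG0: "IqG \<ge> 0" "IpG \<ge> 0" unfolding IqG_def IpG_def Lq_int_vec_def by auto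
  have fq: "(\<integral>\<^sup>+x\<in>\<Omega>. ennreal (G x powr q) \<partial>lborel) \<le> ennreal (Bg powr q * W)"
    using Om Bg Bg0 q0 by (intro int_Omega_bound) (auto simp: G_def intro!: powr_mono2)
  have eIqG: "(\<integral>\<^sup>+x. ennreal (G x powr q) \<partial>lborel) = ennreal IqG"
  proof -
    have "(\<integral>\<^sup>+x. ennreal (G x powr q) \<partial>lborel) = (\<integral>\<^sup>+x\<in>\<Omega>. ennreal (G x powr q) \<partial>lborel)"
      by (rule int_Omega_eq) (simp add: G0)
    moreover have "(\<integral>\<^sup>+x\<in>\<Omega>. ennreal (G x powr q) \<partial>lborel) < \<infinity>"
      using fq by (simp add: le_less_trans)
    ultimately show ?thesis unfolding IqG_def Lq_int_vec_def G_def
      by (simp add: less_top)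
  qed
  have fp: "(\<integral>\<^sup>+x\<in>\<Omega>. ennreal (G x powr p) \<partial>lborel) \<le> ennreal (Bg powr p * W)"
    using Om Bg Bg0 p0 by (intro int_Omega_bound) (auto simp: G_def intro!: powr_mono2)
  have eIpG: "(\<integral>\<^sup>+x\<in>\<Omega>. ennreal (G x powr p) \<partial>lborel) = ennreal IpG"
  proof -
    have "(\<integral>\<^sup>+x\<in>\<Omega>. ennreal (G x powr p) \<partial>lborel) < \<infinity>"
      using fp by (simp add: le_less_trans)
    then show ?thesis unfolding IpG_def Lq_int_vec_def G_def
      by (simp add: less_top)
  qed
  define P1 where "P1 = enn2real (\<integral>\<^sup>+x. ennreal \<bar>\<phi> x\<bar> \<partial>lborel)"
  have f1: "(\<integral>\<^sup>+x\<in>\<Omega>. ennreal \<bar>\<phi> x\<bar> \<partial>lborel) \<le> ennreal (Bf * W)"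
    using Om Bf Bf0 by (intro int_Omega_bound) auto
  have eP1: "(\<integral>\<^sup>+x. ennreal \<bar>\<phi> x\<bar> \<partial>lborel) = ennreal P1"
  proof -
    have "(\<integral>\<^sup>+x. ennreal \<bar>\<phi> x\<bar> \<partial>lborel) = (\<integral>\<^sup>+x\<in>\<Omega>. ennreal \<bar>\<phi> x\<bar> \<partial>lborel)"
      by (rule int_Omega_eq) (simp add: s1)
    moreover have "(\<integral>\<^sup>+x\<in>\<Omega>. ennreal \<bar>\<phi> x\<bar> \<partial>lborel) < \<infinity>"
      using f1 by (simp add: le_less_trans)
    ultimately show ?thesis unfolding P1_def by (simp add: less_top)
  qed
  have P10: "P1 \<ge> 0" unfolding P1_def by simp
  define P1G where "P1G = enn2real (\<integral>\<^sup>+x. ennreal (G x) \<partial>lborel)"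
  have f1G: "(\<integral>\<^sup>+x\<in>\<Omega>. ennreal (G x) \<partial>lborel) \<le> ennreal (Bg * W)"
    using Om Bg Bg0 by (intro int_Omega_bound) (auto simp: G_def)
  have eP1G: "(\<integral>\<^sup>+x. ennreal (G x) \<partial>lborel) = ennreal P1G"
  proof -
    have "(\<integral>\<^sup>+x. ennreal (G x) \<partial>lborel) = (\<integral>\<^sup>+x\<in>\<Omega>. ennreal (G x) \<partial>lborel)"
      by (rule int_Omega_eq) (simp add: G0)
    moreover have "(\<integral>\<^sup>+x\<in>\<Omega>. ennreal (G x) \<partial>lborel) < \<infinity>"
      using f1G by (simp add: le_less_trans)
    ultimately show ?thesis unfolding P1G_def by (simp add: less_top)
  qed
  have P1G0: "P1G \<ge> 0" unfolding P1G_def by simp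
  have Ab: "\<bar>A x\<bar> \<le> P1 / m" for x
  proof -
    have cy: "continuous_on UNIV (\<lambda>y. \<phi> (x + y))"
      by (rule continuous_on_compose2[OF contf]) (auto intro!: continuous_intros)
    have cy': "continuous_on UNIV (\<lambda>y. \<bar>\<phi> (x + y)\<bar>)" using cy by (intro continuous_intros)
    have int2: "integrable lborel (\<lambda>y. indicator (cball 0 h) y * \<bar>\<phi> (x + y)\<bar>)"
      using borel_integrable_compact[OF compact_cball continuous_on_subset[OF cy' subset_UNIV]] by simp
    have mt: "(\<lambda>y. ennreal \<bar>\<phi> y\<bar>) \<in> borel_measurable borel"
      using borel_measurable_continuous_onI[OF continuous_on_rabs[OF contf]]
      by (rule measurable_compose[OF _ measurable_ennreal])
    have "\<bar>\<integral>y. indicator (cball 0 h) y * \<phi> (x + y) \<partial>lborel\<bar> \<le> (\<integral>y. norm (indicator (cball 0 h) y * \<phi> (x + y)) \<partial>lborel)"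
      using integral_norm_bound[of lborel "\<lambda>y. indicator (cball 0 h) y * \<phi> (x + y)"] by simp
    also have "\<dots> = (\<integral>y. indicator (cball 0 h) y * \<bar>\<phi> (x + y)\<bar> \<partial>lborel)"
      by (intro Bochner_Integration.integral_cong) (auto split: split_indicator)
    also have "\<dots> = enn2real (\<integral>\<^sup>+y. ennreal (indicator (cball 0 h) y * \<bar>\<phi> (x + y)\<bar>) \<partial>lborel)"
      using int2 by (subst nn_integral_eq_integral) (auto intro!: integral_nonneg_AE)
    also have "\<dots> \<le> enn2real (\<integral>\<^sup>+y. ennreal \<bar>\<phi> (x + y)\<bar> \<partial>lborel)"
    proof (rule enn2real_mono)
      show "(\<integral>\<^sup>+y. ennreal (indicator (cball 0 h) y * \<bar>\<phi> (x + y)\<bar>) \<partial>lborel) \<le> (\<integral>\<^sup>+y. ennreal \<bar>\<phi> (x + y)\<bar> \<partial>lborel)"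
        by (intro nn_integral_mono) (auto split: split_indicator)
      show "(\<integral>\<^sup>+y. ennreal \<bar>\<phi> (x + y)\<bar> \<partial>lborel) < top"
        using nn_translate[OF mt, of x] eP1 by (simp add: add.commute)
    qed
    also have "(\<integral>\<^sup>+y. ennreal \<bar>\<phi> (x + y)\<bar> \<partial>lborel) = (\<integral>\<^sup>+y. ennreal \<bar>\<phi> y\<bar> \<partial>lborel)"
      using nn_translate[OF mt, of x] by (simp add: add.commute)
    finally have "\<bar>\<integral>y. indicator (cball 0 h) y * \<phi> (x + y) \<partial>lborel\<bar> \<le> P1" unfolding P1_def .
    then show ?thesis unfolding A_def using m0 by (simp add: divide_right_mono)
  qed
  obtain e :: 'a where e: "e \<in> Basis" using nonempty_Basis by blast
  have ne: "norm ((2*R) *\<^sub>R e) = 2 * R" using e R0 by simp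
  have pt1: "ennreal \<bar>\<phi> x\<bar> \<le> ennreal \<bar>\<phi> (x + (2*R) *\<^sub>R e) - \<phi> x\<bar>" for x
  proof (cases "x \<in> \<Omega>")
    case True
    then have "norm x < R" using R by auto
    moreover have "norm ((2*R) *\<^sub>R e) \<le> norm (x + (2*R) *\<^sub>R e) + norm x"
      using norm_triangle_ineq4[of "x + (2*R) *\<^sub>R e" x] by simp
    ultimately have "norm (x + (2*R) *\<^sub>R e) > R" using ne by simp
    then have "x + (2*R) *\<^sub>R e \<notin> \<Omega>" using R by auto
    then show ?thesis using s1 by simp
  qed (simp add: s1)
  have "ennreal P1 \<le> (\<integral>\<^sup>+x. ennreal \<bar>\<phi> (x + (2*R) *\<^sub>R e) - \<phi> x\<bar> \<partial>lborel)"
    unfolding eP1[symmetric] by (intro nn_integral_mono pt1)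
  also have "\<dots> \<le> ennreal (norm ((2*R) *\<^sub>R e)) * (\<integral>\<^sup>+x. ennreal (norm (cgrad \<phi> x)) \<partial>lborel)"
    by (rule diff_int_1[OF diff cont])
  also have "\<dots> = ennreal (2 * R * P1G)"
    using eP1G R0 P1G0 unfolding ne G_def by (simp add: ennreal_mult)
  finally have P1b: "P1 \<le> 2 * R * P1G"
    using R0 P1G0 by (subst (asm) ennreal_le_iff) auto
  have mG: "G \<in> borel_measurable lborel"
    unfolding G_def using borel_measurable_continuous_onI[OF continuous_on_norm[OF cont]] by simp
  note jen = jensen_nn[where A="\<Omega>" and m=W and f=G and Bd=Bg and q=p, OF Om mG _ _ p]
  have j1: "(\<integral>\<^sup>+x. ennreal (indicator \<Omega> x * G x) \<partial>lborel) = ennreal P1G"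
    unfolding eP1G[symmetric] using G0 by (intro nn_integral_cong) (auto split: split_indicator)
  have j2: "(\<integral>\<^sup>+x. ennreal (indicator \<Omega> x * G x powr p) \<partial>lborel) = ennreal IpG"
    unfolding eIpG[symmetric] by (intro nn_integral_cong) (auto split: split_indicator)
  have P1Gb: "P1G powr p \<le> W powr (p-1) * IpG"
    using jen(3) j1 j2 P1G0 IqG0 by (simp add: G_def Bg)
  have mA: "A \<in> borel_measurable lborel"
  proof -
    have "continuous_on UNIV (\<lambda>p::'a\<times>'a. \<phi> (fst p + snd p))"
      by (rule continuous_on_compose2[OF contf]) (auto intro!: continuous_intros)
    then have "(\<lambda>p::'a\<times>'a. \<phi> (fst p + snd p)) \<in> borel_measurable borel"
      by (rule borel_measurable_continuous_onI)
    moreover have "(\<lambda>p::'a\<times>'a. indicator (UNIV \<times> cball 0 h) p :: real) \<in> borel_measurable borel"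
      by (rule borel_measurable_indicator) (auto intro: borel_closed closed_Times)
    ultimately have "(\<lambda>p::'a\<times>'a. indicator (UNIV \<times> cball 0 h) p * \<phi> (fst p + snd p)) \<in> borel_measurable borel"
      by (intro borel_measurable_times)
    moreover have "(\<lambda>p::'a\<times>'a. indicator (UNIV \<times> cball 0 h) p :: real) = (\<lambda>p. indicator (cball 0 h) (snd p))"
      by (auto simp: fun_eq_iff split: split_indicator)
    ultimately have "(\<lambda>(x,y). indicator (cball 0 h) y * \<phi> (x + y)) \<in> borel_measurable (lborel \<Otimes>\<^sub>M lborel)"
      by (simp add: lborel_prod case_prod_beta')
    then have "(\<lambda>x. \<integral>y. indicator (cball 0 h) y * \<phi> (x + y) \<partial>lborel) \<in> borel_measurable lborel"
      by (rule lborel.borel_measurable_lebesgue_integral)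
    then show ?thesis unfolding A_def by measurable
  qed
  have mf: "\<phi> \<in> borel_measurable lborel"
    using borel_measurable_continuous_onI[OF contf] by simp
  have mD: "(\<lambda>x. ennreal (\<bar>\<phi> x - A x\<bar> powr q)) \<in> borel_measurable lborel"
    using mA mf by measurable
  have pw: "ennreal (\<bar>\<phi> x\<bar> powr q) * indicator \<Omega> x
      \<le> ennreal (2 powr q) * (ennreal (\<bar>\<phi> x - A x\<bar> powr q) + ennreal ((P1/m) powr q) * indicator \<Omega> x)" for x
  proof (cases "x \<in> \<Omega>")
    case True
    have "\<bar>\<phi> x\<bar> \<le> \<bar>\<phi> x - A x\<bar> + \<bar>A x\<bar>" by simp
    then have "\<bar>\<phi> x\<bar> powr q \<le> (\<bar>\<phi> x - A x\<bar> + \<bar>A x\<bar>) powr q" using q0 by (intro powr_mono2) auto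
    also have "\<dots> \<le> 2 powr q * (\<bar>\<phi> x - A x\<bar> powr q + \<bar>A x\<bar> powr q)" by (rule pow2_ineq) (use q0 in auto)
    also have "\<dots> \<le> 2 powr q * (\<bar>\<phi> x - A x\<bar> powr q + (P1/m) powr q)"
      using Ab[of x] q0 by (intro mult_left_mono add_left_mono powr_mono2) auto
    finally have "ennreal (\<bar>\<phi> x\<bar> powr q) \<le> ennreal (2 powr q * (\<bar>\<phi> x - A x\<bar> powr q + (P1/m) powr q))"
      by (rule ennreal_leI)
    then show ?thesis using True by (simp add: ennreal_mult ennreal_plus)
  qed simp
  have "(\<integral>\<^sup>+x\<in>\<Omega>. ennreal (\<bar>\<phi> x\<bar> powr q) \<partial>lborel)
       \<le> (\<integral>\<^sup>+x. ennreal (2 powr q) * (ennreal (\<bar>\<phi> x - A x\<bar> powr q) + ennreal ((P1/m) powr q) * indicator \<Omega> x) \<partial>lborel)"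
    by (intro nn_integral_mono pw)
  also have "\<dots> = ennreal (2 powr q) * ((\<integral>\<^sup>+x. ennreal (\<bar>\<phi> x - A x\<bar> powr q) \<partial>lborel) + ennreal ((P1/m) powr q) * ennreal W)"
    using mD Om by (simp add: nn_integral_cmult nn_integral_add nn_integral_cmult_indicator)
  also have "\<dots> \<le> ennreal (2 powr q) * (ennreal (h powr q) * ennreal IqG + ennreal ((P1/m) powr q) * ennreal W)"
  proof -
    have "(\<integral>\<^sup>+x. ennreal (\<bar>\<phi> x - A x\<bar> powr q) \<partial>lborel) \<le> ennreal (h powr q) * ennreal IqG"
      using avg_diff[OF diff cont contf Bf Bg q h] eIqG unfolding A_def m_def G_def by simp
    then show ?thesis by (intro mult_left_mono add_right_mono) auto
  qed
  also have "\<dots> = ennreal (2 powr q * (h powr q * IqG + W * (P1/m) powr q))"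
    using IqG0 Om by (simp add: ennreal_mult ennreal_plus mult_ac)
  finally have L1: "Lq_int q \<Omega> \<phi> \<le> 2 powr q * (h powr q * IqG + W * (P1/m) powr q)"
    unfolding Lq_int_def using IqG0 Om by (simp add: enn2real_leI)
  have "(P1/m) powr q \<le> (2 * R * P1G / m) powr q"
    using P1b P10 m0 q0 by (intro powr_mono2 divide_right_mono) auto
  also have "\<dots> = (2 * R / m) powr q * P1G powr q"
    using R0 m0 P1G0 by (simp add: powr_mult[symmetric])
  also have "P1G powr q = (P1G powr p) powr (q/p)"
    using p0 P1G0 by (simp add: powr_powr)
  also have "\<dots> \<le> (W powr (p-1) * IpG) powr (q/p)"
    using P1Gb p0 q0 P1G0 by (intro powr_mono2) auto
  finally have "(P1/m) powr q \<le> (2 * R / m) powr q * (W powr (p-1) * IpG) powr (q/p)"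
    using R0 m0 by (simp add: mult_left_mono)
  then have "W * (P1/m) powr q \<le> W * (2 * R / m) powr q * (W powr (p-1) * IpG) powr (q/p)"
    using Om by (simp add: mult_left_mono mult.assoc)
  then show ?thesis using L1 unfolding IqG_def IpG_def
    by (smt (verit) mult_left_mono powr_ge_zero)
qed

lemma test_fun_props:
  fixes \<phi> :: "'a::euclidean_space \<Rightarrow> real"
  assumes "test_fun \<Omega> \<phi>"
  shows "\<exists>Bf Bg. (\<forall>z. \<bar>\<phi> z\<bar> \<le> Bf) \<and> (\<forall>z. norm (cgrad \<phi> z) \<le> Bg)
      \<and> (\<forall>x. x \<notin> \<Omega> \<longrightarrow> \<phi> x = 0 \<and> cgrad \<phi> x = 0)"
proof -
  let ?K = "closure {x. \<phi> x \<noteq> 0}"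
  note tb = test_fun_basic[OF assms]
  have c1: "continuous_on ?K \<phi>" using tb(1) by (rule continuous_on_subset) simp
  have "compact (\<phi> ` ?K)" using compact_continuous_image[OF c1 tb(4)] .
  then obtain Bf where Bf: "\<And>y. y \<in> \<phi> ` ?K \<Longrightarrow> norm y \<le> Bf"
    using compact_imp_bounded bounded_iff by metis
  have c2: "continuous_on ?K (cgrad \<phi>)" using tb(3) by (rule continuous_on_subset) simp
  have "compact (cgrad \<phi> ` ?K)" using compact_continuous_image[OF c2 tb(4)] .
  then obtain Bg where Bg: "\<And>y. y \<in> cgrad \<phi> ` ?K \<Longrightarrow> norm y \<le> Bg"
    using compact_imp_bounded bounded_iff by metis
  have o1: "\<phi> x = 0" if "x \<notin> ?K" for x
  proof (rule ccontr)
    assume "\<phi> x \<noteq> 0" then have "x \<in> {x. \<phi> x \<noteq> 0}" by simp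
    then have "x \<in> ?K" by (rule subsetD[OF closure_subset])
    then show False by (rule notE[OF that])
  qed
  have o2: "cgrad \<phi> x = 0" if "x \<notin> ?K" for x using that by (rule cgrad_outside)
  have f1: "\<bar>\<phi> z\<bar> \<le> max Bf 0" for z
    using Bf[of "\<phi> z"] o1[of z] by (cases "z \<in> ?K") auto
  have f2: "norm (cgrad \<phi> z) \<le> max Bg 0" for z
    using Bg[of "cgrad \<phi> z"] o2[of z] by (cases "z \<in> ?K") auto
  have f3: "\<phi> x = 0 \<and> cgrad \<phi> x = 0" if "x \<notin> \<Omega>" for x
  proof -
    have "x \<notin> ?K"
    proof
      assume "x \<in> ?K" then have "x \<in> \<Omega>" by (rule subsetD[OF tb(5)])
      then show False by (rule notE[OF that])
    qed
    then show ?thesis by (intro conjI o1 o2)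
  qed
  show ?thesis
    apply (rule exI[of _ "max Bf 0"], rule exI[of _ "max Bg 0"])
    using f1 f2 f3 by simp
qed

lemma split_int:
  fixes F Aa Bb :: "'a::euclidean_space \<Rightarrow> real"
  assumes m: "F \<in> borel_measurable lborel" "Aa \<in> borel_measurable lborel" "Bb \<in> borel_measurable lborel"
    and le: "\<And>x. F x \<le> Aa x + Bb x" and nn: "\<And>x. 0 \<le> F x" "\<And>x. 0 \<le> Aa x" "\<And>x. 0 \<le> Bb x"
    and r: "r > 0" and Om: "\<Omega> \<in> sets lborel"
  shows "(\<integral>\<^sup>+x\<in>\<Omega>. ennreal (F x powr r) \<partial>lborel)
    \<le> ennreal (2 powr r) * ((\<integral>\<^sup>+x\<in>\<Omega>. ennreal (Aa x powr r) \<partial>lborel) + (\<integral>\<^sup>+x\<in>\<Omega>. ennreal (Bb x powr r) \<partial>lborel))"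
proof -
  have pt: "ennreal (F x powr r) * indicator \<Omega> x \<le> ennreal (2 powr r) * (ennreal (Aa x powr r) * indicator \<Omega> x + ennreal (Bb x powr r) * indicator \<Omega> x)" for x
  proof -
    have "F x powr r \<le> (Aa x + Bb x) powr r" using le nn r by (intro powr_mono2) auto
    also have "\<dots> \<le> 2 powr r * (Aa x powr r + Bb x powr r)" using nn r by (intro pow2_ineq) auto
    finally have "ennreal (F x powr r) \<le> ennreal (2 powr r * (Aa x powr r + Bb x powr r))"
      by (rule ennreal_leI)
    also have "\<dots> = ennreal (2 powr r) * (ennreal (Aa x powr r) + ennreal (Bb x powr r))"
      by (simp add: ennreal_mult ennreal_plus)
    finally have "ennreal (F x powr r) \<le> ennreal (2 powr r) * (ennreal (Aa x powr r) + ennreal (Bb x powr r))" .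
    then show ?thesis by (auto split: split_indicator)
  qed
  have "(\<integral>\<^sup>+x\<in>\<Omega>. ennreal (F x powr r) \<partial>lborel) \<le> (\<integral>\<^sup>+x. ennreal (2 powr r) * (ennreal (Aa x powr r) * indicator \<Omega> x + ennreal (Bb x powr r) * indicator \<Omega> x) \<partial>lborel)"
    by (intro nn_integral_mono pt)
  also have "\<dots> = ennreal (2 powr r) * ((\<integral>\<^sup>+x\<in>\<Omega>. ennreal (Aa x powr r) \<partial>lborel) + (\<integral>\<^sup>+x\<in>\<Omega>. ennreal (Bb x powr r) \<partial>lborel))"
    using m Om by (simp add: nn_integral_cmult nn_integral_add)
  finally show ?thesis .
qed

lemma pq_int:
  fixes w :: "'a::euclidean_space \<Rightarrow> real"
  assumes m: "w \<in> borel_measurable lborel" and nn: "\<And>x. 0 \<le> w x" and p: "0 < p" "p < q"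
    and Om: "\<Omega> \<in> sets lborel" "emeasure lborel \<Omega> = ennreal W"
  shows "(\<integral>\<^sup>+x\<in>\<Omega>. ennreal (w x powr p) \<partial>lborel) \<le> ennreal W + (\<integral>\<^sup>+x\<in>\<Omega>. ennreal (w x powr q) \<partial>lborel)"
proof -
  have pt: "ennreal (w x powr p) * indicator \<Omega> x \<le> indicator \<Omega> x + ennreal (w x powr q) * indicator \<Omega> x" for x
  proof -
    have "w x powr p \<le> 1 + w x powr q"
    proof (cases "w x \<le> 1")
      case True
      then have "w x powr p \<le> 1" using nn p by (intro powr_le1) auto
      then show ?thesis by (smt (verit) powr_ge_zero)
    next
      case False
      then have "w x powr p \<le> w x powr q" using p by (intro powr_mono) auto
      then show ?thesis by simp
    qed
    then have "ennreal (w x powr p) \<le> ennreal (1 + w x powr q)"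
      by (rule ennreal_leI)
    also have "\<dots> = 1 + ennreal (w x powr q)" by (simp add: ennreal_plus)
    finally have "ennreal (w x powr p) \<le> 1 + ennreal (w x powr q)" .
    then show ?thesis by (auto split: split_indicator)
  qed
  have "(\<integral>\<^sup>+x\<in>\<Omega>. ennreal (w x powr p) \<partial>lborel) \<le> (\<integral>\<^sup>+x. indicator \<Omega> x + ennreal (w x powr q) * indicator \<Omega> x \<partial>lborel)"
    by (intro nn_integral_mono pt)
  also have "\<dots> = ennreal W + (\<integral>\<^sup>+x\<in>\<Omega>. ennreal (w x powr q) \<partial>lborel)"
    using m Om by (simp add: nn_integral_add)
  finally show ?thesis .
qed

lemma W0_ineq:
  fixes \<Omega> :: "'a::euclidean_space set" and u :: "'a \<Rightarrow> real"
  assumes Om: "\<Omega> \<in> sets lborel" "emeasure lborel \<Omega> = ennreal W" "W > 0" "\<Omega> \<subseteq> ball 0 R"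
    and p: "1 < p" and pq: "p < q" and h: "h > 0" and u: "u \<in> W0 q \<Omega>"
  defines "m \<equiv> measure lborel (cball (0::'a) h)"
  shows "Lq_int_vec q \<Omega> (D q \<Omega> u) \<ge> 0 \<and> Lq_int_vec p \<Omega> (D q \<Omega> u) \<ge> 0 \<and>
    Lq_int q \<Omega> u \<le> 2 powr q * (2 powr q * (h powr q * (2 powr q * (Lq_int_vec q \<Omega> (D q \<Omega> u) + 1))
      + W * (2 * R / m) powr q * (W powr (p-1) * (2 powr p * (Lq_int_vec p \<Omega> (D q \<Omega> u) + W + 1))) powr (q/p)) + 1)"
proof -
  have q: "q > 1" using p pq by simp
  have q0: "q > 0" and p0: "p > 0" using q p by auto
  define g where "g = D q \<Omega> u"
  have sob: "sobolev0 q \<Omega> u g"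
  proof -
    obtain g0 where "sobolev0 q \<Omega> u g0" using u unfolding W0_def by blast
    then show ?thesis unfolding g_def D_def by (rule someI[where P="sobolev0 q \<Omega> u"])
  qed
  then obtain \<phi>s where mu[measurable]: "u \<in> borel_measurable lborel" and mg[measurable]: "g \<in> borel_measurable lborel"
    and tf: "\<And>k. test_fun \<Omega> (\<phi>s k)"
    and cE: "(\<lambda>k. \<integral>\<^sup>+ x\<in>\<Omega>. ennreal (\<bar>\<phi>s k x - u x\<bar> powr q) \<partial>lborel) \<longlonglongrightarrow> 0"
    and cF: "(\<lambda>k. \<integral>\<^sup>+ x\<in>\<Omega>. ennreal (norm (cgrad (\<phi>s k) x - g x) powr q) \<partial>lborel) \<longlonglongrightarrow> 0"
    unfolding sobolev0_def by blast
  have "eventually (\<lambda>k. (\<integral>\<^sup>+ x\<in>\<Omega>. ennreal (\<bar>\<phi>s k x - u x\<bar> powr q) \<partial>lborel) < 1) sequentially"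
    using cE by (rule order_tendstoD) simp
  moreover have "eventually (\<lambda>k. (\<integral>\<^sup>+ x\<in>\<Omega>. ennreal (norm (cgrad (\<phi>s k) x - g x) powr q) \<partial>lborel) < 1) sequentially"
    using cF by (rule order_tendstoD) simp
  ultimately obtain k where
    Ek: "(\<integral>\<^sup>+ x\<in>\<Omega>. ennreal (\<bar>\<phi>s k x - u x\<bar> powr q) \<partial>lborel) < 1" and
    Fk: "(\<integral>\<^sup>+ x\<in>\<Omega>. ennreal (norm (cgrad (\<phi>s k) x - g x) powr q) \<partial>lborel) < 1"
    using eventually_conj eventually_sequentially by (metis (no_types, lifting) order_refl)
  define \<phi> where "\<phi> = \<phi>s k"
  have tf1: "test_fun \<Omega> \<phi>" unfolding \<phi>_def by (rule tf)
  note tb = test_fun_basic[OF tf1]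
  obtain Bf Bg where Bf: "\<And>z. \<bar>\<phi> z\<bar> \<le> Bf" and Bg: "\<And>z. norm (cgrad \<phi> z) \<le> Bg"
    and out: "\<And>x. x \<notin> \<Omega> \<Longrightarrow> \<phi> x = 0 \<and> cgrad \<phi> x = 0"
    using test_fun_props[OF tf1] by blast
  have Bf0: "Bf \<ge> 0" using Bf[of 0] by simp
  have Bg0: "Bg \<ge> 0" using norm_ge_zero[of "cgrad \<phi> 0"] Bg[of 0] by linarith
  have mphi[measurable]: "\<phi> \<in> borel_measurable lborel"
    using borel_measurable_continuous_onI[OF tb(1)] by simp
  have mgr[measurable]: "cgrad \<phi> \<in> borel_measurable lborel"
    using borel_measurable_continuous_onI[OF tb(3)] by simp
  have E1: "(\<integral>\<^sup>+ x\<in>\<Omega>. ennreal (\<bar>\<phi> x - u x\<bar> powr q) \<partial>lborel) \<le> 1"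
    using Ek unfolding \<phi>_def by simp
  have F1: "(\<integral>\<^sup>+ x\<in>\<Omega>. ennreal (norm (cgrad \<phi> x - g x) powr q) \<partial>lborel) \<le> 1"
    using Fk unfolding \<phi>_def by simp
  have Lphi: "(\<integral>\<^sup>+ x\<in>\<Omega>. ennreal (\<bar>\<phi> x\<bar> powr q) \<partial>lborel) = ennreal (Lq_int q \<Omega> \<phi>)"
  proof -
    have "(\<integral>\<^sup>+ x\<in>\<Omega>. ennreal (\<bar>\<phi> x\<bar> powr q) \<partial>lborel) \<le> ennreal (Bf powr q * W)"
      using Om Bf Bf0 q0 by (intro int_Omega_bound) (auto intro!: powr_mono2)
    then have "(\<integral>\<^sup>+ x\<in>\<Omega>. ennreal (\<bar>\<phi> x\<bar> powr q) \<partial>lborel) < \<infinity>" by (simp add: le_less_trans)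
    then show ?thesis unfolding Lq_int_def by (simp add: less_top)
  qed
  have LGq: "(\<integral>\<^sup>+ x\<in>\<Omega>. ennreal (norm (cgrad \<phi> x) powr q) \<partial>lborel) = ennreal (Lq_int_vec q \<Omega> (cgrad \<phi>))"
  proof -
    have "(\<integral>\<^sup>+ x\<in>\<Omega>. ennreal (norm (cgrad \<phi> x) powr q) \<partial>lborel) \<le> ennreal (Bg powr q * W)"
      using Om Bg Bg0 q0 by (intro int_Omega_bound) (auto intro!: powr_mono2)
    then have "(\<integral>\<^sup>+ x\<in>\<Omega>. ennreal (norm (cgrad \<phi> x) powr q) \<partial>lborel) < \<infinity>" by (simp add: le_less_trans)
    then show ?thesis unfolding Lq_int_vec_def by (simp add: less_top)
  qed
  have LGp: "(\<integral>\<^sup>+ x\<in>\<Omega>. ennreal (norm (cgrad \<phi> x) powr p) \<partial>lborel) = ennreal (Lq_int_vec p \<Omega> (cgrad \<phi>))"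
  proof -
    have "(\<integral>\<^sup>+ x\<in>\<Omega>. ennreal (norm (cgrad \<phi> x) powr p) \<partial>lborel) \<le> ennreal (Bg powr p * W)"
      using Om Bg Bg0 p0 by (intro int_Omega_bound) (auto intro!: powr_mono2)
    then have "(\<integral>\<^sup>+ x\<in>\<Omega>. ennreal (norm (cgrad \<phi> x) powr p) \<partial>lborel) < \<infinity>" by (simp add: le_less_trans)
    then show ?thesis unfolding Lq_int_vec_def by (simp add: less_top)
  qed
  have "(\<integral>\<^sup>+ x\<in>\<Omega>. ennreal (\<bar>u x\<bar> powr q) \<partial>lborel)
      \<le> ennreal (2 powr q) * ((\<integral>\<^sup>+ x\<in>\<Omega>. ennreal (\<bar>\<phi> x\<bar> powr q) \<partial>lborel) + (\<integral>\<^sup>+ x\<in>\<Omega>. ennreal (\<bar>\<phi> x - u x\<bar> powr q) \<partial>lborel))"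
    by (rule split_int) (use Om q0 in auto)
  also have "\<dots> \<le> ennreal (2 powr q) * (ennreal (Lq_int q \<Omega> \<phi>) + 1)"
    unfolding Lphi using E1 by (intro mult_left_mono add_left_mono) auto
  also have "\<dots> = ennreal (2 powr q * (Lq_int q \<Omega> \<phi> + 1))"
    by (simp add: ennreal_mult ennreal_plus Lq_int_def)
  finally have S1: "Lq_int q \<Omega> u \<le> 2 powr q * (Lq_int q \<Omega> \<phi> + 1)"
    unfolding Lq_int_def by (rule enn2real_leI[rotated]) simp
  have tri1: "norm (g x) \<le> norm (cgrad \<phi> x) + norm (cgrad \<phi> x - g x)" for x
    using norm_triangle_ineq4[of "cgrad \<phi> x" "cgrad \<phi> x - g x"] by simp
  have tri2: "norm (cgrad \<phi> x) \<le> norm (g x) + norm (cgrad \<phi> x - g x)" for x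
    using norm_triangle_ineq[of "g x" "cgrad \<phi> x - g x"] by simp
  have "(\<integral>\<^sup>+ x\<in>\<Omega>. ennreal (norm (g x) powr q) \<partial>lborel)
      \<le> ennreal (2 powr q) * ((\<integral>\<^sup>+ x\<in>\<Omega>. ennreal (norm (cgrad \<phi> x) powr q) \<partial>lborel) + (\<integral>\<^sup>+ x\<in>\<Omega>. ennreal (norm (cgrad \<phi> x - g x) powr q) \<partial>lborel))"
    by (rule split_int) (use Om q0 tri1 in auto)
  also have "\<dots> \<le> ennreal (2 powr q) * (ennreal (Lq_int_vec q \<Omega> (cgrad \<phi>)) + 1)"
    unfolding LGq using F1 by (intro mult_left_mono add_left_mono) auto
  finally have "(\<integral>\<^sup>+ x\<in>\<Omega>. ennreal (norm (g x) powr q) \<partial>lborel) < \<infinity>"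
    by (simp add: le_less_trans ennreal_mult_less_top)
  then have Lg: "(\<integral>\<^sup>+ x\<in>\<Omega>. ennreal (norm (g x) powr q) \<partial>lborel) = ennreal (Lq_int_vec q \<Omega> g)"
    unfolding Lq_int_vec_def by (simp add: less_top)
  have "ennreal (Lq_int_vec q \<Omega> (cgrad \<phi>))
      \<le> ennreal (2 powr q) * ((\<integral>\<^sup>+ x\<in>\<Omega>. ennreal (norm (g x) powr q) \<partial>lborel) + (\<integral>\<^sup>+ x\<in>\<Omega>. ennreal (norm (cgrad \<phi> x - g x) powr q) \<partial>lborel))"
    unfolding LGq[symmetric] by (rule split_int) (use Om q0 tri2 in auto)
  also have "\<dots> \<le> ennreal (2 powr q) * (ennreal (Lq_int_vec q \<Omega> g) + 1)"
    unfolding Lg using F1 by (intro mult_left_mono add_left_mono) auto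
  also have "\<dots> = ennreal (2 powr q * (Lq_int_vec q \<Omega> g + 1))"
    by (simp add: ennreal_mult ennreal_plus Lq_int_vec_def)
  finally have S2: "Lq_int_vec q \<Omega> (cgrad \<phi>) \<le> 2 powr q * (Lq_int_vec q \<Omega> g + 1)"
    by (subst (asm) ennreal_le_iff) (auto simp: Lq_int_vec_def)
  have Fp: "(\<integral>\<^sup>+ x\<in>\<Omega>. ennreal (norm (cgrad \<phi> x - g x) powr p) \<partial>lborel) \<le> ennreal W + 1"
  proof -
    have "(\<integral>\<^sup>+ x\<in>\<Omega>. ennreal (norm (cgrad \<phi> x - g x) powr p) \<partial>lborel)
       \<le> ennreal W + (\<integral>\<^sup>+ x\<in>\<Omega>. ennreal (norm (cgrad \<phi> x - g x) powr q) \<partial>lborel)"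
      by (rule pq_int) (use Om p0 pq in auto)
    also have "\<dots> \<le> ennreal W + 1" using F1 by (rule add_left_mono)
    finally show ?thesis .
  qed
  have "(\<integral>\<^sup>+ x\<in>\<Omega>. ennreal (norm (g x) powr p) \<partial>lborel) \<le> ennreal W + (\<integral>\<^sup>+ x\<in>\<Omega>. ennreal (norm (g x) powr q) \<partial>lborel)"
    by (rule pq_int) (use Om p0 pq in auto)
  then have "(\<integral>\<^sup>+ x\<in>\<Omega>. ennreal (norm (g x) powr p) \<partial>lborel) < \<infinity>"
    unfolding Lg by (simp add: le_less_trans flip: ennreal_plus)
  then have Lgp: "(\<integral>\<^sup>+ x\<in>\<Omega>. ennreal (norm (g x) powr p) \<partial>lborel) = ennreal (Lq_int_vec p \<Omega> g)"
    unfolding Lq_int_vec_def by (simp add: less_top)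
  have "ennreal (Lq_int_vec p \<Omega> (cgrad \<phi>))
      \<le> ennreal (2 powr p) * ((\<integral>\<^sup>+ x\<in>\<Omega>. ennreal (norm (g x) powr p) \<partial>lborel) + (\<integral>\<^sup>+ x\<in>\<Omega>. ennreal (norm (cgrad \<phi> x - g x) powr p) \<partial>lborel))"
    unfolding LGp[symmetric] by (rule split_int) (use Om p0 tri2 in auto)
  also have "\<dots> \<le> ennreal (2 powr p) * (ennreal (Lq_int_vec p \<Omega> g) + (ennreal W + 1))"
    unfolding Lgp using Fp by (intro mult_left_mono add_left_mono) auto
  also have "\<dots> = ennreal (2 powr p * (Lq_int_vec p \<Omega> g + W + 1))"
    using Om by (simp add: ennreal_mult ennreal_plus Lq_int_vec_def add.assoc)
  finally have S3: "Lq_int_vec p \<Omega> (cgrad \<phi>) \<le> 2 powr p * (Lq_int_vec p \<Omega> g + W + 1)"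
    using Om by (subst (asm) ennreal_le_iff) (auto simp: Lq_int_vec_def)
  have S4: "Lq_int q \<Omega> \<phi> \<le> 2 powr q * (h powr q * Lq_int_vec q \<Omega> (cgrad \<phi>)
          + W * (2 * R / m) powr q * (W powr (p-1) * Lq_int_vec p \<Omega> (cgrad \<phi>)) powr (q/p))"
    unfolding m_def
    by (rule test_ineq[OF tb(2) tb(3) tb(1) _ _ Bf Bg Om p pq h]) (use out in auto)
  have nn: "Lq_int_vec q \<Omega> g \<ge> 0" "Lq_int_vec p \<Omega> g \<ge> 0" "Lq_int_vec p \<Omega> (cgrad \<phi>) \<ge> 0"
    unfolding Lq_int_vec_def by auto
  have "Lq_int q \<Omega> \<phi> \<le> 2 powr q * (h powr q * (2 powr q * (Lq_int_vec q \<Omega> g + 1))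
      + W * (2 * R / m) powr q * (W powr (p-1) * (2 powr p * (Lq_int_vec p \<Omega> g + W + 1))) powr (q/p))"
  proof -
    have a: "h powr q * Lq_int_vec q \<Omega> (cgrad \<phi>) \<le> h powr q * (2 powr q * (Lq_int_vec q \<Omega> g + 1))"
      using S2 by (intro mult_left_mono) auto
    have b: "(W powr (p-1) * Lq_int_vec p \<Omega> (cgrad \<phi>)) powr (q/p) \<le> (W powr (p-1) * (2 powr p * (Lq_int_vec p \<Omega> g + W + 1))) powr (q/p)"
      using S3 nn p0 q0 by (intro powr_mono2 mult_left_mono) auto
    have c: "W * (2 * R / m) powr q \<ge> 0" using Om by simp
    from mult_left_mono[OF b c] a S4 show ?thesis
      by (smt (verit) mult_left_mono powr_ge_zero)
  qed
  then show ?thesis unfolding g_def[symmetric] using S1 nn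
    by (smt (verit) mult_left_mono powr_ge_zero)
qed

lemma domain_facts:
  fixes \<Omega> :: "'a::euclidean_space set"
  assumes "bounded_C2_domain \<Omega>"
  shows "\<exists>W R. \<Omega> \<in> sets lborel \<and> emeasure lborel \<Omega> = ennreal W \<and> W > 0 \<and> \<Omega> \<subseteq> ball 0 R"
proof -
  have o: "open \<Omega>" and ne: "\<Omega> \<noteq> {}" and b: "bounded \<Omega>"
    using assms unfolding bounded_C2_domain_def by auto
  have sets: "\<Omega> \<in> sets lborel" using o by simp
  have fin: "emeasure lborel \<Omega> \<noteq> top" using emeasure_bounded_finite[OF b] by simp
  define W where "W = measure lborel \<Omega>"
  have eW: "emeasure lborel \<Omega> = ennreal W" unfolding W_def using fin by (rule emeasure_eq_ennreal_measure)
  obtain x where x: "x \<in> \<Omega>" using ne by auto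
  obtain r where r: "r > 0" "ball x r \<subseteq> \<Omega>" using o x openE by blast
  have "cball x (r/2) \<subseteq> ball x r" using r by (auto simp: subset_eq)
  then have "cball x (r/2) \<subseteq> \<Omega>" using r(2) by (rule subset_trans)
  then have "emeasure lborel (cball x (r/2)) \<le> emeasure lborel \<Omega>"
    using sets by (intro emeasure_mono) auto
  moreover have "emeasure lborel (cball x (r/2)) = ennreal (unit_ball_vol (DIM('a)) * (r/2) ^ DIM('a))"
    by (rule emeasure_cball) (use r in simp)
  ultimately have "ennreal (unit_ball_vol (DIM('a)) * (r/2) ^ DIM('a)) \<le> ennreal W" using eW by simp
  moreover have "unit_ball_vol (DIM('a)) * (r/2) ^ DIM('a) > 0" using r by simp
  moreover have "W \<ge> 0" unfolding W_def by simp
  ultimately have W0: "W > 0" using ennreal_le_iff by (metis less_le_trans)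
  obtain R where "R > 0" "\<Omega> \<subseteq> ball 0 R" using bounded_subset_ballD[OF b] by blast
  then show ?thesis using sets eW W0 by blast
qed

theorem proposition3:
  fixes \<Omega> :: "'a::euclidean_space set"
    and \<alpha> \<beta> p q lam :: real
    and u :: "nat \<Rightarrow> 'a \<Rightarrow> real"
  assumes "bounded_C2_domain \<Omega>"
    and "\<alpha> > 0" and "\<beta> > 0" and "1 < p" and "p < q"
    and "lam > \<beta> * lambda1_hat q \<Omega>"
    and "\<forall>n. u n \<in> nehari \<alpha> \<beta> p q lam \<Omega>"
    and "(\<lambda>n. energy \<alpha> \<beta> p q lam \<Omega> (u n)) \<longlonglongrightarrow> m_lambda \<alpha> \<beta> p q lam \<Omega>"
  shows "\<exists>C. \<forall>n. W_norm q \<Omega> (u n) \<le> C"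
proof -
  note a = assms
  have q: "q > 1" and q0: "q > 0" and p0: "p > 0" using a(4,5) by auto
  obtain W R where Om: "\<Omega> \<in> sets lborel" "emeasure lborel \<Omega> = ennreal W" "W > 0" "\<Omega> \<subseteq> ball 0 R"
    using domain_facts[OF a(1)] by blast
  define L where "L n = Lq_int q \<Omega> (u n)" for n
  define A where "A n = Lq_int_vec q \<Omega> (D q \<Omega> (u n))" for n
  define P where "P n = Lq_int_vec p \<Omega> (D q \<Omega> (u n))" for n
  have nn: "L n \<ge> 0" "A n \<ge> 0" "P n \<ge> 0" for n
    unfolding L_def A_def P_def Lq_int_def Lq_int_vec_def by auto
  have neh: "u n \<in> W0 q \<Omega>" "L n \<noteq> 0" "\<alpha> * P n + \<beta> * A n = lam * L n" for n
    using a(7) unfolding nehari_def L_def A_def P_def by auto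
  have Lpos: "L n > 0" for n using nn(1)[of n] neh(2)[of n] by simp
  have lam0: "lam \<ge> 0"
  proof -
    have "lam * L 0 \<ge> 0" using neh(3)[of 0] nn a(2,3) by (smt (verit) mult_nonneg_nonneg)
    then show ?thesis using Lpos[of 0] by (simp add: zero_le_mult_iff)
  qed
  define \<kappa> where "\<kappa> = \<alpha> * (1/p - 1/q)"
  have \<kappa>0: "\<kappa> > 0" unfolding \<kappa>_def using a(2,4,5) by (simp add: field_simps)
  have en: "energy \<alpha> \<beta> p q lam \<Omega> (u n) = \<kappa> * P n" for n
  proof -
    have "energy \<alpha> \<beta> p q lam \<Omega> (u n) = \<alpha> / p * P n + \<beta> / q * A n - (lam * L n) / q"
      unfolding energy_def L_def A_def P_def by simp
    also have "\<dots> = \<alpha> / p * P n + \<beta> / q * A n - (\<alpha> * P n + \<beta> * A n) / q" using neh(3)[of n] by simp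
    also have "\<dots> = \<kappa> * P n" unfolding \<kappa>_def by (simp add: field_simps add_divide_distrib)
    finally show ?thesis .
  qed
  have "Bseq (\<lambda>n. energy \<alpha> \<beta> p q lam \<Omega> (u n))"
    using a(8) by (intro convergent_imp_Bseq) (auto simp: convergent_def)
  then obtain M where M0: "\<forall>n. norm (energy \<alpha> \<beta> p q lam \<Omega> (u n)) \<le> M" unfolding Bseq_def by blast
  have M: "norm (energy \<alpha> \<beta> p q lam \<Omega> (u n)) \<le> M" for n using M0 by blast
  define Pm where "Pm = M / \<kappa>"
  have Pm: "P n \<le> Pm" for n
  proof -
    have "\<kappa> * P n \<le> M" using M[of n] en[of n] by simp
    then show ?thesis unfolding Pm_def using \<kappa>0 by (simp add: field_simps)
  qed
  define \<delta> where "\<delta> = \<beta> / (2 * (lam + 1))"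
  have \<delta>0: "\<delta> > 0" unfolding \<delta>_def using a(3) lam0 by simp
  define h where "h = \<delta> powr (1/q) / 8"
  have h0: "h > 0" unfolding h_def using \<delta>0 by simp
  define c where "c = 2 powr q * 2 powr q * 2 powr q * h powr q"
  have c: "c = \<delta>"
  proof -
    have "2 powr q * 2 powr q * 2 powr q = (8::real) powr q" by (simp add: powr_mult[symmetric])
    moreover have "h powr q = \<delta> / 8 powr q"
      unfolding h_def using \<delta>0 q0 by (simp add: powr_divide powr_powr)
    ultimately show ?thesis unfolding c_def by simp
  qed
  define m where "m = measure lborel (cball (0::'a) h)"
  define Xm where "Xm = W * (2 * R / m) powr q * (W powr (p-1) * (2 powr p * (Pm + W + 1))) powr (q/p)"
  define K where "K = 2 powr q * (2 powr q * (h powr q * 2 powr q) + 2 powr q * Xm + 1)"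
  have key: "L n \<le> c * A n + K" for n
  proof -
    have k: "Lq_int q \<Omega> (u n) \<le> 2 powr q * (2 powr q * (h powr q * (2 powr q * (Lq_int_vec q \<Omega> (D q \<Omega> (u n)) + 1))
      + W * (2 * R / m) powr q * (W powr (p-1) * (2 powr p * (Lq_int_vec p \<Omega> (D q \<Omega> (u n)) + W + 1))) powr (q/p)) + 1)"
      unfolding m_def using W0_ineq[OF Om a(4,5) h0 neh(1)[of n]] by blast
    have X: "W * (2 * R / m) powr q * (W powr (p-1) * (2 powr p * (P n + W + 1))) powr (q/p) \<le> Xm"
    proof -
      have "(W powr (p-1) * (2 powr p * (P n + W + 1))) powr (q/p) \<le> (W powr (p-1) * (2 powr p * (Pm + W + 1))) powr (q/p)"
        using Pm[of n] nn(3)[of n] Om(3) p0 q0 by (intro powr_mono2 mult_left_mono) auto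
      moreover have "W * (2 * R / m) powr q \<ge> 0" using Om(3) by simp
      ultimately show ?thesis unfolding Xm_def by (simp add: mult_left_mono)
    qed
    have "L n \<le> 2 powr q * (2 powr q * (h powr q * (2 powr q * (A n + 1))) + 2 powr q * Xm + 1)"
      using k X unfolding L_def A_def P_def
      by (smt (verit) mult_left_mono powr_ge_zero distrib_left)
    also have "\<dots> = c * A n + K" unfolding c_def K_def by (simp add: algebra_simps)
    finally show ?thesis .
  qed
  have K0: "K \<ge> 0" unfolding K_def Xm_def using Om(3) by simp
  define Am where "Am = 2 * lam * K / \<beta>"
  have Ab: "A n \<le> Am" for n
  proof -
    have "\<beta> * A n \<le> lam * L n" using neh(3)[of n] nn(3)[of n] a(2) by (smt (verit) mult_nonneg_nonneg)
    also have "\<dots> \<le> lam * (c * A n + K)" using key[of n] lam0 by (intro mult_left_mono) auto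
    also have "\<dots> = (lam * \<delta>) * A n + lam * K" unfolding c by (simp add: algebra_simps)
    also have "lam * \<delta> \<le> \<beta> / 2"
    proof -
      have "lam * \<delta> = \<beta> / 2 * (lam / (lam + 1))" unfolding \<delta>_def using lam0 by (simp add: field_simps)
      also have "\<dots> \<le> \<beta> / 2 * 1" using lam0 a(3) by (intro mult_left_mono) auto
      finally show ?thesis by simp
    qed
    then have "(lam * \<delta>) * A n \<le> \<beta> / 2 * A n" using nn(2)[of n] by (rule mult_right_mono)
    finally have "\<beta> * A n \<le> \<beta> / 2 * A n + lam * K" by simp
    then have "\<beta> * A n \<le> 2 * lam * K" by simp
    then show ?thesis unfolding Am_def using a(3) by (simp add: field_simps)
  qed
  define Lm where "Lm = c * Am + K"
  have Lb: "L n \<le> Lm" for n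
    using key[of n] Ab[of n] c \<delta>0 unfolding Lm_def by (smt (verit) mult_left_mono)
  show ?thesis
  proof (intro exI allI)
    fix n
    have "L n powr (1/q) \<le> Lm powr (1/q)" using Lb[of n] nn(1)[of n] q0 by (intro powr_mono2) auto
    moreover have "A n powr (1/q) \<le> Am powr (1/q)" using Ab[of n] nn(2)[of n] q0 by (intro powr_mono2) auto
    ultimately show "W_norm q \<Omega> (u n) \<le> Lm powr (1/q) + Am powr (1/q)"
      unfolding W_norm_def L_def A_def by simp
  qed
qed

end
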